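(* Let $n\ge1$, $0<s<1$, $\Omega\subset\mathbb{R}^n$ a bounded open set, $u\in L^1_{2s}(\mathbb{R}^n)\cap C(\overline\Omega)$ non-negative, and $g\in C([0,\infty))$ with $g(0)=0$. Assume $(-\Delta)^s u\ge g(u)$ in $\Omega$ in the viscosity sense. Let $u_{\mathrm{tor}}$ be a torsion function of $\Omega$. Then either $u=0$ a.e. in $\mathbb{R}^n$, or $u>0$ in $\Omega$ and $u\ge C\,u_{\mathrm{tor}}$ in $\Omega$ for some constant $C>0$.
   Context: $L^1_{2s}(\mathbb{R}^n)$ is the space of locally integrable $u$ on $\mathbb{R}^n$ with $\int_{\mathbb{R}^n}\frac{|u(x)|}{1+|x|^{n+2s}}dx<\infty$. For $u\in L^1_{2s}(\mathbb{R}^n)$ upper semicontinuous in $\Omega$ and $f:\Omega\to\mathbb{R}$, $(-\Delta)^s u\ge f$ in $\Omega$ in the viscosity sense means: for every $x\in\Omega$, every open neighbourhood $U\subset\Omega$ of $x$ and every $\phi\in C^2(U)$ with $\phi(x)=u(x)$ and $\phi<u$ in $U\setminus\{x\}$, setting $w=\phi$ in $U$, $w=u$ in $\mathbb{R}^n\setminus U$, one has $2\,\mathrm{P.V.}\int_{\mathbb{R}^n}\frac{w(x)-w(y)}{|x-y|^{n+2s}}dy\ge f(x)$; $(-\Delta)^s u\le f$ is defined symmetrically (for lower semicontinuous $u$, test functions $\phi>u$ in $U\setminus\{x\}$ touching at $x$, conclusion $\le f(x)$), and $(-\Delta)^s u=f$ means $u\in C(\Omega)$ and both hold. A torsion function of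 $\Omega$ is $u_{\mathrm{tor}}\in L^1_{2s}(\mathbb{R}^n)\cap C(\overline\Omega)$ with $u_{\mathrm{tor}}=0$ in $\mathbb{R}^n\setminus\Omega$ and $(-\Delta)^s u_{\mathrm{tor}}=1$ in $\Omega$ in the viscosity sense. *)

theory Defs
  imports "HOL-Analysis.Analysis"
begin

definition L1_2s :: "real \<Rightarrow> ('a::euclidean_space \<Rightarrow> real) \<Rightarrow> bool" where
  "L1_2s s u \<longleftrightarrow>
     (\<forall>K. compact K \<longrightarrow> set_integrable lborel K u) \<and>
     integrable lborel (\<lambda>x. u x / (1 + norm x powr (real DIM('a) + 2 * s)))"

definition C2_on :: "'a::euclidean_space set \<Rightarrow> ('a \<Rightarrow> real) \<Rightarrow> bool" where
  "C2_on U \<phi> \<longleftrightarrow>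
     (\<exists>(G :: 'a \<Rightarrow> ('a \<Rightarrow>\<^sub>L real)) (H :: 'a \<Rightarrow> ('a \<Rightarrow>\<^sub>L ('a \<Rightarrow>\<^sub>L real))).
        (\<forall>x\<in>U. (\<phi> has_derivative blinfun_apply (G x)) (at x)) \<and>
        (\<forall>x\<in>U. (G has_derivative blinfun_apply (H x)) (at x)) \<and>
        continuous_on U H)"

definition pv_trunc :: "real \<Rightarrow> ('a::euclidean_space \<Rightarrow> real) \<Rightarrow> 'a \<Rightarrow> real \<Rightarrow> ereal" where
  "pv_trunc s w x eps =
     enn2ereal (\<integral>\<^sup>+ y. ennreal (indicator {y. eps < dist x y} y *
         max 0 ((w x - w y) / dist x y powr (real DIM('a) + 2 * s))) \<partial>lborel)
   - enn2ereal (\<integral>\<^sup>+ y. ennreal (indicator {y. eps < dist x y} y *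
         max 0 ((w y - w x) / dist x y powr (real DIM('a) + 2 * s))) \<partial>lborel)"

definition frac_pv_ge :: "real \<Rightarrow> ('a::euclidean_space \<Rightarrow> real) \<Rightarrow> 'a \<Rightarrow> real \<Rightarrow> bool" where
  "frac_pv_ge s w x c \<longleftrightarrow>
     (\<exists>L. ((\<lambda>eps. 2 * pv_trunc s w x eps) \<longlongrightarrow> L) (at_right 0) \<and> ereal c \<le> L)"

definition frac_pv_le :: "real \<Rightarrow> ('a::euclidean_space \<Rightarrow> real) \<Rightarrow> 'a \<Rightarrow> real \<Rightarrow> bool" where
  "frac_pv_le s w x c \<longleftrightarrow>
     (\<exists>L. ((\<lambda>eps. 2 * pv_trunc s w x eps) \<longlongrightarrow> L) (at_right 0) \<and> L \<le> ereal c)"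

text \<open>(-Delta)^s u >= f in Omega in the viscosity sense (u upper semicontinuous in Omega).\<close>
definition visc_super :: "real \<Rightarrow> 'a::euclidean_space set \<Rightarrow> ('a \<Rightarrow> real) \<Rightarrow> ('a \<Rightarrow> real) \<Rightarrow> bool" where
  "visc_super s \<Omega> u f \<longleftrightarrow>
     L1_2s s u \<and>
     (\<forall>x\<in>\<Omega>. \<forall>e>0. \<forall>\<^sub>F y in at x within \<Omega>. u y < u x + e) \<and>
     (\<forall>x\<in>\<Omega>. \<forall>U \<phi>. open U \<and> x \<in> U \<and> U \<subseteq> \<Omega> \<and> C2_on U \<phi> \<and> \<phi> x = u x \<and>
          (\<forall>y\<in>U - {x}. \<phi> y < u y) \<longrightarrow>
          frac_pv_ge s (\<lambda>y. if y \<in> U then \<phi> y else u y) x (f x))"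

text \<open>(-Delta)^s u <= f in Omega in the viscosity sense (u lower semicontinuous in Omega).\<close>
definition visc_sub :: "real \<Rightarrow> 'a::euclidean_space set \<Rightarrow> ('a \<Rightarrow> real) \<Rightarrow> ('a \<Rightarrow> real) \<Rightarrow> bool" where
  "visc_sub s \<Omega> u f \<longleftrightarrow>
     L1_2s s u \<and>
     (\<forall>x\<in>\<Omega>. \<forall>e>0. \<forall>\<^sub>F y in at x within \<Omega>. u x - e < u y) \<and>
     (\<forall>x\<in>\<Omega>. \<forall>U \<phi>. open U \<and> x \<in> U \<and> U \<subseteq> \<Omega> \<and> C2_on U \<phi> \<and> \<phi> x = u x \<and>
          (\<forall>y\<in>U - {x}. u y < \<phi> y) \<longrightarrow>
          frac_pv_le s (\<lambda>y. if y \<in> U then \<phi> y else u y) x (f x))"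

definition visc_sol :: "real \<Rightarrow> 'a::euclidean_space set \<Rightarrow> ('a \<Rightarrow> real) \<Rightarrow> ('a \<Rightarrow> real) \<Rightarrow> bool" where
  "visc_sol s \<Omega> u f \<longleftrightarrow> continuous_on \<Omega> u \<and> visc_super s \<Omega> u f \<and> visc_sub s \<Omega> u f"

definition torsion_function :: "real \<Rightarrow> 'a::euclidean_space set \<Rightarrow> ('a \<Rightarrow> real) \<Rightarrow> bool" where
  "torsion_function s \<Omega> ut \<longleftrightarrow>
     L1_2s s ut \<and> continuous_on (closure \<Omega>) ut \<and> (\<forall>x. x \<notin> \<Omega> \<longrightarrow> ut x = 0) \<and>
     visc_sol s \<Omega> ut (\<lambda>_. 1)"

end

theory Submission
  imports Defs
begin

lemma emeasure_lborel_ball_scale: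
  fixes c :: "'a::euclidean_space"
  assumes "r \<ge> 0"
  shows "emeasure lborel (ball c r) = ennreal (r ^ DIM('a)) * emeasure lborel (ball (0::'a) 1)"
proof -
  have "emeasure lborel (ball c r) = emeasure lebesgue (ball c r)"
    by (simp add: emeasure_completion)
  also have "\<dots> = ennreal (r ^ DIM('a)) * emeasure lebesgue (ball (0 :: 'a) 1)"
    using assms by (rule emeasure_lebesgue_ball_conv_unit_ball)
  also have "emeasure lebesgue (ball (0 :: 'a) 1) = emeasure lborel (ball (0 :: 'a) 1)"
    by (simp add: emeasure_completion)
  finally show ?thesis .
qed

lemma nn_integral_dyadic_bound:
  fixes f :: "'a::euclidean_space \<Rightarrow> ennreal" and c :: 'a
  assumes le: "\<And>y. f y \<le> (\<Sum>k. ennreal (ck k) * indicator (ball c (R k)) y)"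
    and ck: "\<And>k. 0 \<le> ck k" and R: "\<And>k. 0 \<le> R k"
  shows "(\<integral>\<^sup>+y. f y \<partial>lborel) \<le> (\<Sum>k. ennreal (ck k * R k ^ DIM('a))) * emeasure lborel (ball (0::'a) 1)"
proof -
  have "(\<integral>\<^sup>+y. f y \<partial>lborel) \<le> (\<integral>\<^sup>+y. (\<Sum>k. ennreal (ck k) * indicator (ball c (R k)) y) \<partial>lborel)"
    by (rule nn_integral_mono) (use le in auto)
  also have "\<dots> = (\<Sum>k. \<integral>\<^sup>+y. ennreal (ck k) * indicator (ball c (R k)) y \<partial>lborel)"
  proof (rule nn_integral_suminf)
    fix k
    have [measurable]: "ball c (R k) \<in> sets borel" by simp
    show "(\<lambda>y. ennreal (ck k) * indicator (ball c (R k)) y) \<in> borel_measurable lborel"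
      by (intro borel_measurable_times_ennreal borel_measurable_const borel_measurable_indicator) simp
  qed
  also have "\<dots> = (\<Sum>k. ennreal (ck k) * emeasure lborel (ball c (R k)))"
    by (simp add: nn_integral_cmult_indicator)
  also have "\<dots> = (\<Sum>k. ennreal (ck k * R k ^ DIM('a)) * emeasure lborel (ball (0::'a) 1))"
  proof -
    have "ennreal (ck k) * emeasure lborel (ball c (R k)) = ennreal (ck k * R k ^ DIM('a)) * emeasure lborel (ball (0::'a) 1)" for k
    proof -
      have "ennreal (ck k * R k ^ DIM('a)) = ennreal (ck k) * ennreal (R k ^ DIM('a))"
        using R[of k] ck[of k] by (intro ennreal_mult) auto
      then show ?thesis
        by (simp only: emeasure_lborel_ball_scale[OF R[of k]] mult.assoc)
    qed
    then show ?thesis by simp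
  qed
  also have "\<dots> = (\<Sum>k. ennreal (ck k * R k ^ DIM('a))) * emeasure lborel (ball (0::'a) 1)"
    by (rule ennreal_suminf_multc)
  finally show ?thesis .
qed

lemma power_powr_swap: "0 < (a::real) \<Longrightarrow> (a ^ k) powr p = (a powr p) ^ k"
  by (induction k) (auto simp: powr_mult)

lemma q_lt1: "- real n < (p::real) \<Longrightarrow> 2 powr (-(real n + p)) < 1"
  by (simp add: powr_less_one)

lemma apow_lemma: "0 < (r::real) \<Longrightarrow> (r * (1/2) ^ k) powr (p::real) = r powr p * (2 powr (-p)) ^ (k::nat)"
proof -
  assume r: "0 < r"
  have "(r * (1/2) ^ k) powr p = r powr p * ((1/2::real) ^ k) powr p"
    using r by (simp add: powr_mult)
  also have "((1/2::real) ^ k) powr p = ((1/2) powr p) ^ k" by (simp add: power_powr_swap)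
  also have "(1/2::real) powr p = 2 powr (-p)" by (simp add: powr_minus_divide powr_divide)
  finally show ?thesis .
qed

lemma qeq: "(2 powr (-p)) * (1/2::real) ^ n = 2 powr (-(real n + p))"
proof -
  have "(1/2::real) ^ n = 2 powr (- real n)"
    by (simp add: powr_minus_divide powr_realpow power_one_over)
  then show ?thesis by (simp add: powr_add[symmetric] algebra_simps)
qed
lemma dyadic_shell:
  assumes "1 \<le> (x::real)"
  shows "\<exists>k::nat. 2 ^ k \<le> x \<and> x < 2 ^ Suc k"
proof -
  define k where "k = nat \<lfloor>log 2 x\<rfloor>"
  have l0: "0 \<le> log 2 x" using assms by simp
  have "real k \<le> log 2 x" "log 2 x < real k + 1"
    unfolding k_def using l0 by linarith+
  then have "2 powr real k \<le> 2 powr log 2 x" "2 powr log 2 x < 2 powr (real k + 1)"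
    by (auto intro: powr_mono)
  then have "2 ^ k \<le> x \<and> x < 2 ^ Suc k"
    using assms by (simp_all add: powr_realpow[symmetric] powr_add)
  then show ?thesis by blast
qed

lemma ennreal_le_suminf_term:
  fixes f :: "nat \<Rightarrow> ennreal"
  shows "f k \<le> (\<Sum>j. f j)"
  using sum_le_suminf[OF summableI, of "{k}" f] by simp

lemma inner_int_bound:
  fixes c :: "'a::euclidean_space"
  assumes p: "- real DIM('a) < p" and r: "0 < r"
  shows "(\<integral>\<^sup>+y. ennreal (indicator (ball c r) y * dist c y powr p) \<partial>lborel)
     \<le> ennreal (r powr (real DIM('a) + p) * (2 powr (-p) + 1) * 2 ^ DIM('a) / (1 - 2 powr (-(real DIM('a) + p))))
        * emeasure lborel (ball (0::'a) 1)"
proof -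
  define n where "n = DIM('a)"
  define q where "q = 2 powr (-(real n + p))"
  define ck where "ck k = r powr p * (2 powr (-p) + 1) * (2 powr (-p)) ^ k" for k :: nat
  define R where "R k = 2 * r * (1/2) ^ k" for k :: nat
  have q: "0 < q" "q < 1" unfolding q_def using p q_lt1[of n p] by (auto simp: n_def)
  have ck0: "0 \<le> ck k" for k unfolding ck_def by simp
  have R0: "0 \<le> R k" for k unfolding R_def using r by simp
  have pt: "ennreal (indicator (ball c r) y * dist c y powr p)
      \<le> (\<Sum>k. ennreal (ck k) * indicator (ball c (R k)) y)" for y
  proof (cases "y \<in> ball c r \<and> y \<noteq> c")
    case False
    then show ?thesis by (auto simp: indicator_def)
  next
    case True
    define t where "t = dist c y"
    have t: "0 < t" "t < r" using True by (auto simp: t_def)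
    obtain k where k: "2 ^ k \<le> r / t" "r / t < 2 ^ Suc k"
      using dyadic_shell[of "r / t"] t by auto
    define a where "a = r * (1/2) ^ k"
    have aeq: "a = r / 2 ^ k" by (simp add: a_def power_one_over)
    have k1: "t * 2 ^ k \<le> r" using k(1) t by (simp add: field_simps)
    have k2: "r < t * 2 ^ Suc k" using k(2) t by (simp add: field_simps)
    have a1: "t \<le> a" unfolding aeq using k1 by (simp add: field_simps)
    have a2: "a / 2 < t" unfolding aeq using k2 by (simp add: field_simps)
    note a = a1 a2
    have apow: "a powr p = r powr p * (2 powr (-p)) ^ k"
      unfolding a_def using r by (rule apow_lemma)
    have "a / 2 = r * (1/2) ^ Suc k" by (simp add: a_def)
    then have a2pow: "(a/2) powr p = r powr p * 2 powr (-p) * (2 powr (-p)) ^ k"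
      using apow_lemma[of r "Suc k" p] r by simp
    have "t powr p \<le> ck k"
    proof (cases "0 \<le> p")
      case True
      then have "t powr p \<le> a powr p" using a t by (intro powr_mono2) auto
      also have "\<dots> \<le> ck k" unfolding apow ck_def
        by (simp add: algebra_simps)
      finally show ?thesis .
    next
      case False
      then have "t powr p \<le> (a/2) powr p" using a t by (intro powr_mono2') auto
      also have "\<dots> \<le> ck k" unfolding a2pow ck_def
        by (simp add: algebra_simps)
      finally show ?thesis .
    qed
    moreover have "y \<in> ball c (R k)"
    proof -
      have "R k = 2 * a" by (simp add: R_def a_def)
      moreover have "t < 2 * a" using a t by linarith
      ultimately show ?thesis by (simp add: t_def)
    qed
    ultimately have "ennreal (indicator (ball c r) y * dist c y powr p) \<le> ennreal (ck k) * indicator (ball c (R k)) y"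
      using True by (auto simp: t_def intro!: ennreal_leI)
    also have "\<dots> \<le> (\<Sum>k. ennreal (ck k) * indicator (ball c (R k)) y)"
      by (rule ennreal_le_suminf_term)
    finally show ?thesis .
  qed
  have eq: "ck k * R k ^ n = r powr (real n + p) * (2 powr (-p) + 1) * 2 ^ n * q ^ k" for k
  proof -
    have "R k ^ n = 2 ^ n * r ^ n * ((1/2) ^ n) ^ k"
      by (simp add: R_def power_mult_distrib flip: power_mult) (simp add: mult.commute)
    then have "ck k * R k ^ n = r powr p * r ^ n * (2 powr (-p) + 1) * 2 ^ n * ((2 powr (-p)) ^ k * ((1/2) ^ n) ^ k)"
      by (simp add: ck_def)
    also have "(2 powr (-p)) ^ k * ((1/2) ^ n) ^ k = ((2 powr (-p)) * (1/2) ^ n) ^ k"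
      by (simp add: power_mult_distrib)
    also have "(2 powr (-p)) * (1/2) ^ n = q"
      unfolding q_def by (rule qeq)
    also have "r powr p * r ^ n = r powr (real n + p)"
      using r by (simp add: powr_add powr_realpow)
    finally show ?thesis by simp
  qed
  have sums: "(\<lambda>k. ck k * R k ^ n) sums (r powr (real n + p) * (2 powr (-p) + 1) * 2 ^ n * (1 / (1 - q)))"
    unfolding eq using q by (intro sums_mult geometric_sums) auto
  have "(\<integral>\<^sup>+y. ennreal (indicator (ball c r) y * dist c y powr p) \<partial>lborel)
     \<le> (\<Sum>k. ennreal (ck k * R k ^ DIM('a))) * emeasure lborel (ball (0::'a) 1)"
    by (rule nn_integral_dyadic_bound[OF pt ck0 R0])
  also have "(\<Sum>k. ennreal (ck k * R k ^ DIM('a))) = ennreal (r powr (real n + p) * (2 powr (-p) + 1) * 2 ^ n * (1 / (1 - q)))"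
  proof -
    have "(\<lambda>k. ennreal (ck k * R k ^ n)) sums ennreal (r powr (real n + p) * (2 powr (-p) + 1) * 2 ^ n * (1 / (1 - q)))"
      using sums ck0 R0 q r by (subst sums_ennreal) auto
    then show ?thesis by (simp add: n_def sums_iff)
  qed
  finally show ?thesis by (simp add: n_def q_def)
qed


lemma tail_int_finite:
  fixes c :: "'a::euclidean_space"
  assumes p: "p < - real DIM('a)" and e: "0 < e"
  shows "(\<integral>\<^sup>+y. ennreal (indicator {y. e < dist c y} y * dist c y powr p) \<partial>lborel) < \<infinity>"
proof -
  define n where "n = DIM('a)"
  define q where "q = 2 powr p * 2 ^ n"
  define ck where "ck k = e powr p * (2 powr p) ^ k" for k :: nat
  define R where "R k = 4 * e * 2 ^ k" for k :: nat
  have qeq: "q = 2 powr (p + real n)" unfolding q_def by (simp add: powr_add powr_realpow)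
  have q: "0 < q" "q < 1" unfolding qeq using p by (auto simp: n_def powr_less_one)
  have ck0: "0 \<le> ck k" for k unfolding ck_def by simp
  have R0: "0 \<le> R k" for k unfolding R_def using e by simp
  have pt: "ennreal (indicator {y. e < dist c y} y * dist c y powr p)
      \<le> (\<Sum>k. ennreal (ck k) * indicator (ball c (R k)) y)" for y
  proof (cases "e < dist c y")
    case False
    then show ?thesis by (auto simp: indicator_def)
  next
    case True
    define t where "t = dist c y"
    have t: "e < t" using True by (auto simp: t_def)
    obtain k where k: "2 ^ k \<le> t / e" "t / e < 2 ^ Suc k"
      using dyadic_shell[of "t / e"] t e by auto
    define a where "a = e * 2 ^ k"
    have a0: "0 < a" using e by (simp add: a_def)
    have a1: "a \<le> t" using k(1) e by (simp add: a_def field_simps)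
    have a2: "t < 2 * a" using k(2) e by (simp add: a_def field_simps)
    have apow: "a powr p = ck k"
      using e by (simp add: a_def ck_def powr_mult power_powr_swap)
    have "t powr p \<le> a powr p" using a0 a1 p by (intro powr_mono2') auto
    then have tp: "t powr p \<le> ck k" using apow by simp
    moreover have "y \<in> ball c (R k)"
    proof -
      have "R k = 4 * a" by (simp add: R_def a_def)
      moreover have "t < 4 * a" using a0 a2 by linarith
      ultimately show ?thesis by (simp add: t_def)
    qed
    ultimately have "ennreal (indicator {y. e < dist c y} y * dist c y powr p) \<le> ennreal (ck k) * indicator (ball c (R k)) y"
      using True by (auto simp: t_def intro!: ennreal_leI)
    also have "\<dots> \<le> (\<Sum>k. ennreal (ck k) * indicator (ball c (R k)) y)"
      by (rule ennreal_le_suminf_term)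
    finally show ?thesis .
  qed
  have eq: "ck k * R k ^ n = e powr p * (4 * e) ^ n * q ^ k" for k
  proof -
    have "R k ^ n = (4 * e) ^ n * (2 ^ n) ^ k"
      by (simp add: R_def power_mult_distrib flip: power_mult)
    then have "ck k * R k ^ n = e powr p * (4 * e) ^ n * ((2 powr p) ^ k * (2 ^ n) ^ k)"
      by (simp add: ck_def)
    also have "(2 powr p) ^ k * (2 ^ n) ^ k = q ^ k"
      by (simp add: q_def power_mult_distrib)
    finally show ?thesis by simp
  qed
  have sums: "(\<lambda>k. ck k * R k ^ n) sums (e powr p * (4 * e) ^ n * (1 / (1 - q)))"
    unfolding eq using q by (intro sums_mult geometric_sums) auto
  have "(\<integral>\<^sup>+y. ennreal (indicator {y. e < dist c y} y * dist c y powr p) \<partial>lborel)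
     \<le> (\<Sum>k. ennreal (ck k * R k ^ DIM('a))) * emeasure lborel (ball (0::'a) 1)"
    by (rule nn_integral_dyadic_bound[OF pt ck0 R0])
  also have "(\<Sum>k. ennreal (ck k * R k ^ DIM('a))) = ennreal (e powr p * (4 * e) ^ n * (1 / (1 - q)))"
  proof -
    have "(\<lambda>k. ennreal (ck k * R k ^ n)) sums ennreal (e powr p * (4 * e) ^ n * (1 / (1 - q)))"
      using sums ck0 R0 q e by (subst sums_ennreal) auto
    then show ?thesis by (simp add: n_def sums_iff)
  qed
  also have "ennreal (e powr p * (4 * e) ^ n * (1 / (1 - q))) * emeasure lborel (ball (0::'a) 1) < \<infinity>"
    using emeasure_lborel_ball_finite[of "0::'a" 1] by (simp add: ennreal_mult_less_top)
  finally show ?thesis .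
qed

lemma C2_quad:
  fixes p q :: "'a::euclidean_space"
  shows "C2_on U (\<lambda>y. a + b * (norm (y - p))\<^sup>2 + c * (norm (y - q))\<^sup>2)"
proof -
  define v where "v x = (2 * b) *\<^sub>R (x - p) + (2 * c) *\<^sub>R (x - q)" for x
  define G where "G x = blinfun_inner_left (v x)" for x
  define Hf where "Hf = (\<lambda>h::'a. blinfun_inner_left ((2 * b + 2 * c) *\<^sub>R h))"
  have blH: "bounded_linear Hf"
    unfolding Hf_def
    by (rule bounded_linear_compose[OF bounded_linear_blinfun_inner_left bounded_linear_scaleR_right])
  define H where "H x = Blinfun Hf" for x :: 'a
  have d1: "((\<lambda>y. a + b * (norm (y - p))\<^sup>2 + c * (norm (y - q))\<^sup>2) has_derivative blinfun_apply (G x)) (at x)" for x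
  proof -
    have "((\<lambda>y. a + b * ((y - p) \<bullet> (y - p)) + c * ((y - q) \<bullet> (y - q))) has_derivative
        (\<lambda>h. b * (h \<bullet> (x - p) + (x - p) \<bullet> h) + c * (h \<bullet> (x - q) + (x - q) \<bullet> h))) (at x)"
      by (auto intro!: derivative_eq_intros ext simp: add.commute)
    moreover have "(\<lambda>h. b * (h \<bullet> (x - p) + (x - p) \<bullet> h) + c * (h \<bullet> (x - q) + (x - q) \<bullet> h)) = blinfun_apply (G x)"
      by (rule ext) (simp add: G_def v_def inner_commute inner_simps algebra_simps)
    ultimately show ?thesis by (simp add: power2_norm_eq_inner)
  qed
  have d2: "(G has_derivative blinfun_apply (H x)) (at x)" for x
  proof -
    have "(v has_derivative (\<lambda>h. (2 * b + 2 * c) *\<^sub>R h)) (at x)"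
      unfolding v_def by (auto intro!: derivative_eq_intros simp: algebra_simps scaleR_add_left)
    then have "((\<lambda>x. blinfun_inner_left (v x)) has_derivative (\<lambda>h. blinfun_inner_left ((2 * b + 2 * c) *\<^sub>R h))) (at x)"
      by (rule bounded_linear.has_derivative[OF bounded_linear_blinfun_inner_left])
    moreover have "blinfun_apply (H x) = Hf" by (simp add: H_def bounded_linear_Blinfun_apply[OF blH])
    ultimately show ?thesis
      by (simp add: G_def[abs_def] Hf_def)
  qed
  have "continuous_on U H" unfolding H_def by simp
  then show ?thesis unfolding C2_on_def using d1 d2 by blast
qed

lemma L1_2s_meas:
  fixes u :: "'a::euclidean_space \<Rightarrow> real"
  assumes "L1_2s s u"
  shows "u \<in> borel_measurable borel"
proof -
  define den where "den x = 1 + norm x powr (real DIM('a) + 2 * s)" for x :: 'a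
  have "integrable lborel (\<lambda>x. u x / den x)" using assms unfolding L1_2s_def den_def by simp
  then have m: "(\<lambda>x. u x / den x) \<in> borel_measurable borel"
    using borel_measurable_integrable by fastforce
  have dm: "den \<in> borel_measurable borel" unfolding den_def by measurable
  have pos: "den x > 0" for x unfolding den_def by (simp add: add_pos_nonneg)
  have "(\<lambda>x. u x / den x * den x) \<in> borel_measurable borel"
    using m dm by (rule borel_measurable_times)
  moreover have "(\<lambda>x. u x / den x * den x) = u" using pos by (auto intro!: ext simp: less_imp_neq[symmetric])
  ultimately show ?thesis by simp
qed

lemma nn_integral_translate:
  fixes f :: "'a::euclidean_space \<Rightarrow> ennreal"
  assumes f: "f \<in> borel_measurable borel"
  shows "(\<integral>\<^sup>+y. f y \<partial>lborel) = (\<integral>\<^sup>+z. f (a + z) \<partial>lborel)"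
proof -
  have "(\<integral>\<^sup>+z. f (a + z) \<partial>lborel) = (\<integral>\<^sup>+y. f y \<partial>distr lborel borel ((+) a))"
    using f by (subst nn_integral_distr) auto
  then show ?thesis by (simp add: lborel_distr_plus)
qed

lemma ereal_combo:
  fixes P1 N1 P2 N2 G L :: ennreal
  assumes C: "0 < C" and P1: "P1 < top" and P2: "P2 < top"
    and L: "L \<le> ennreal l" and G: "ennreal g \<le> G" and g: "0 \<le> g" and l: "0 \<le> l"
    and ineq: "P2 + ennreal C * N1 + G \<le> ennreal C * P1 + N2 + L"
  shows "2 * (enn2ereal P2 - enn2ereal N2) \<le> ereal C * (2 * (enn2ereal P1 - enn2ereal N1)) + ereal (2 * (l - g))"
proof (cases "N2 = top")
  case True
  obtain p2 where p2: "P2 = ennreal p2" "0 \<le> p2" using P2 by (cases P2) auto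
  then show ?thesis using True by simp
next
  case False
  obtain p1 where p1: "P1 = ennreal p1" "0 \<le> p1" using P1 by (cases P1) auto
  obtain p2 where p2: "P2 = ennreal p2" "0 \<le> p2" using P2 by (cases P2) auto
  obtain n2 where n2: "N2 = ennreal n2" "0 \<le> n2" using False by (cases N2) auto
  obtain ll where ll: "L = ennreal ll" "0 \<le> ll" "ll \<le> l"
    using L l by (cases L) (auto simp: ennreal_le_iff top_unique)
  have rhs: "ennreal C * P1 + N2 + L = ennreal (C * p1 + n2 + ll)"
    using p1 n2 ll C by (simp add: ennreal_plus ennreal_mult)
  have "ennreal C * N1 \<le> ennreal (C * p1 + n2 + ll)"
    using ineq rhs by (metis add.commute add_increasing2 le_iff_add order_trans zero_le)
  then have "N1 < top"
  proof (rule contrapos_pp)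
    assume "\<not> N1 < top"
    then have "N1 = top" using top.not_eq_extremum by blast
    then have "ennreal C * N1 = top" using C by (simp add: ennreal_mult_eq_top_iff)
    then show "\<not> ennreal C * N1 \<le> ennreal (C * p1 + n2 + ll)" by (simp add: top_unique)
  qed
  then obtain n1 where n1: "N1 = ennreal n1" "0 \<le> n1" by (cases N1) auto
  have "G \<le> ennreal (C * p1 + n2 + ll)"
    using ineq rhs by (metis add.commute add_increasing2 le_iff_add order_trans zero_le)
  then have "G < top" using ennreal_less_top le_less_trans by blast
  then obtain gg where gg: "G = ennreal gg" "0 \<le> gg" "g \<le> gg" using G g by (cases G) (auto simp: ennreal_le_iff)
  have "ennreal (p2 + C * n1 + gg) \<le> ennreal (C * p1 + n2 + ll)"
    using ineq rhs p2 n1 gg C by (simp add: ennreal_plus ennreal_mult)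
  then have real: "p2 + C * n1 + gg \<le> C * p1 + n2 + ll"
    using C p1 n2 ll by (subst (asm) ennreal_le_iff) auto
  have "2 * (p2 - n2) \<le> C * (2 * (p1 - n1)) + 2 * (l - g)"
    using real gg ll by (simp add: algebra_simps)
  then show ?thesis using p1 p2 n1 n2 by simp
qed

lemma gain_set:
  fixes u :: "'a::euclidean_space \<Rightarrow> real"
  assumes meas: "u \<in> borel_measurable borel" and nonneg: "\<forall>x. 0 \<le> u x"
    and notAE: "\<not> (AE x in lborel. u x = 0)"
  shows "\<exists>A m R a. A \<in> sets borel \<and> A \<subseteq> ball 0 R \<and> 0 < m \<and> (\<forall>y\<in>A. m \<le> u y)
           \<and> emeasure lborel A = ennreal a \<and> 0 < a"
proof -
  define A where "A k = {y. 1 / real (Suc k) \<le> u y} \<inter> ball 0 (real (Suc k))" for k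
  have Am[measurable]: "A k \<in> sets borel" for k unfolding A_def using meas by measurable
  have cover: "{y. u y \<noteq> 0} \<subseteq> (\<Union>k. A k)"
  proof
    fix y assume "y \<in> {y. u y \<noteq> 0}"
    then have uy: "0 < u y" using nonneg by (auto simp: order_le_less)
    obtain k :: nat where k: "max (1 / u y) (norm y) < real k" using reals_Archimedean2 by blast
    have "1 / real (Suc k) \<le> u y"
    proof -
      have "1 / u y < real (Suc k)" using k by simp
      then show ?thesis using uy by (simp add: field_simps)
    qed
    moreover have "norm y < real (Suc k)" using k by simp
    ultimately show "y \<in> (\<Union>k. A k)" by (auto simp: A_def)
  qed
  have "\<exists>k. emeasure lborel (A k) \<noteq> 0"
  proof (rule ccontr)
    assume "\<not> ?thesis"
    then have "(\<Union>k. A k) \<in> null_sets lborel" by (intro null_sets_UN) (auto simp: null_sets_def)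
    then have "AE x in lborel. u x = 0"
      by (rule AE_I') (use cover in auto)
    then show False using notAE by simp
  qed
  then obtain k where k: "emeasure lborel (A k) \<noteq> 0" by blast
  have "emeasure lborel (A k) \<le> emeasure lborel (ball (0::'a) (real (Suc k)))"
    by (rule emeasure_mono) (auto simp: A_def)
  then have fin: "emeasure lborel (A k) < top"
    using emeasure_lborel_ball_finite[of "0::'a" "real (Suc k)"] by (simp add: le_less_trans)
  then obtain a where a: "emeasure lborel (A k) = ennreal a" "0 \<le> a"
    by (cases "emeasure lborel (A k)") auto
  have "0 < a" using a k by (auto simp: order_le_less)
  moreover have "\<forall>y\<in>A k. 1 / real (Suc k) \<le> u y" by (auto simp: A_def)
  moreover have "A k \<subseteq> ball 0 (real (Suc k))" by (auto simp: A_def)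
  ultimately have "A k \<in> sets borel \<and> A k \<subseteq> ball 0 (real (Suc k)) \<and> 0 < 1 / real (Suc k) \<and> (\<forall>y\<in>A k. 1 / real (Suc k) \<le> u y)
           \<and> emeasure lborel (A k) = ennreal a \<and> 0 < a" using a Am[of k] by simp
  then show ?thesis by blast
qed

lemma measure_diff_half:
  fixes A B :: "'a::euclidean_space set"
  assumes A: "A \<in> sets borel" and B: "B \<in> sets borel"
    and eA: "emeasure lborel A = ennreal a" and a: "0 \<le> a"
    and eB: "emeasure lborel B \<le> ennreal (a / 2)"
  shows "ennreal (a / 2) \<le> emeasure lborel (A - B)"
proof (rule ccontr)
  assume "\<not> ?thesis"
  then have lt: "emeasure lborel (A - B) < ennreal (a / 2)" by simp
  then obtain x where x: "emeasure lborel (A - B) = ennreal x" "0 \<le> x" "x < a / 2"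
    by (cases "emeasure lborel (A - B)") (auto simp: ennreal_less_iff)
  have "emeasure lborel A \<le> emeasure lborel ((A - B) \<union> B)"
    by (rule emeasure_mono) (use A B in auto)
  also have "\<dots> \<le> emeasure lborel (A - B) + emeasure lborel B"
    by (rule emeasure_subadditive) (use A B in auto)
  also have "\<dots> \<le> ennreal x + ennreal (a / 2)" using x eB by (simp add: add_left_mono)
  also have "\<dots> = ennreal (x + a / 2)" using x a by (simp add: ennreal_plus)
  finally have cal: "emeasure lborel A \<le> ennreal (x + a / 2)" .
  have "ennreal a \<le> ennreal (x + a / 2)" using cal eA by metis
  then have "a \<le> x + a / 2" using ennreal_le_iff[of "x + a / 2" a] x a by simp
  then show False using x by simp
qed

lemma small_radius:
  fixes c :: "'a::euclidean_space"
  assumes s: "0 < s" "s < 1" and a: "0 < a" and Lam: "0 \<le> Lam" and eps: "0 < eps" and r0: "0 < r0"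
  shows "\<exists>r>0. r < r0 \<and> emeasure lborel (ball c r) \<le> ennreal (a / 2) \<and>
     ennreal Lam * (\<integral>\<^sup>+y. ennreal (indicator (ball c r) y * dist c y powr (2 - (real DIM('a) + 2 * s))) \<partial>lborel) \<le> ennreal eps"
proof -
  define n where "n = DIM('a)"
  define p where "p = 2 - (real n + 2 * s)"
  define K where "K = (2 powr (-p) + 1) * 2 ^ n / (1 - 2 powr (-(real n + p)))"
  obtain V where V: "emeasure lborel (ball (0::'a) 1) = ennreal V" "0 \<le> V"
    using emeasure_lborel_ball_finite[of "0::'a" 1] by (cases "emeasure lborel (ball (0::'a) 1)") auto
  have np: "real n + p = 2 - 2 * s" unfolding p_def by simp
  have pgt: "- real n < p" unfolding p_def using s by simp
  have K0: "0 \<le> K" unfolding K_def using pgt by (auto intro!: divide_nonneg_pos simp: powr_less_one)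
  have n0: "0 < n" unfolding n_def by simp
  have t1: "((\<lambda>r. r ^ n * V) \<longlongrightarrow> 0) (at_right (0::real))"
  proof -
    have "((\<lambda>r. r ^ n * V) \<longlongrightarrow> 0 ^ n * V) (at_right (0::real))"
      by (intro tendsto_intros)
    then show ?thesis using n0 by (simp add: power_0_left)
  qed
  have t2: "((\<lambda>r. Lam * (r powr (2 - 2 * s) * K * V)) \<longlongrightarrow> 0) (at_right (0::real))"
  proof -
    have "((\<lambda>r. r powr (2 - 2 * s)) \<longlongrightarrow> 0) (at_right (0::real))"
      proof (rule tendsto_zero_powrI[where b="2 - 2 * s"])
        show "((\<lambda>r. r) \<longlongrightarrow> 0) (at_right (0::real))" by (rule tendsto_ident_at)
        show "((\<lambda>r. 2 - 2 * s) \<longlongrightarrow> 2 - 2 * s) (at_right (0::real))" by (rule tendsto_const)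
        show "\<forall>\<^sub>F r in at_right (0::real). 0 \<le> r" using eventually_at_right_less[of "0::real"] by (rule eventually_mono) simp
        show "0 < 2 - 2 * s" using s by simp
      qed
    then have "((\<lambda>r. Lam * (r powr (2 - 2 * s) * K * V)) \<longlongrightarrow> Lam * (0 * K * V)) (at_right (0::real))"
      by (intro tendsto_intros)
    then show ?thesis by simp
  qed
  have e1: "eventually (\<lambda>r. r ^ n * V < a / 2) (at_right (0::real))"
    using order_tendstoD(2)[OF t1, of "a/2"] a by simp
  have e2: "eventually (\<lambda>r. Lam * (r powr (2 - 2 * s) * K * V) < eps) (at_right (0::real))"
    using order_tendstoD(2)[OF t2 eps] by simp
  have e3: "eventually (\<lambda>r. r < r0) (at_right (0::real))"
    using order_tendstoD(2)[OF tendsto_ident_at r0] by simp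
  have e4: "eventually (\<lambda>r. 0 < r) (at_right (0::real))"
    by (rule eventually_at_right_less)
  have ev: "eventually (\<lambda>r. 0 < r \<and> r < r0 \<and> r ^ n * V < a / 2 \<and> Lam * (r powr (2 - 2 * s) * K * V) < eps) (at_right (0::real))"
    by (intro eventually_conj e1 e2 e3 e4)
  then obtain r where r: "0 < r" "r < r0" "r ^ n * V < a / 2" "Lam * (r powr (2 - 2 * s) * K * V) < eps"
    using eventually_happens[OF ev] by (auto simp: trivial_limit_at_right_real)
  have "emeasure lborel (ball c r) = ennreal (r ^ n) * ennreal V"
    using r by (simp add: emeasure_lborel_ball_scale V n_def)
  also have "\<dots> = ennreal (r ^ n * V)" using r V by (simp add: ennreal_mult)
  also have "\<dots> \<le> ennreal (a / 2)" using r by (intro ennreal_leI) simp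
  finally have m: "emeasure lborel (ball c r) \<le> ennreal (a / 2)" .
  have "(\<integral>\<^sup>+y. ennreal (indicator (ball c r) y * dist c y powr p) \<partial>lborel)
      \<le> ennreal (r powr (real n + p) * (2 powr (-p) + 1) * 2 ^ n / (1 - 2 powr (-(real n + p)))) * emeasure lborel (ball (0::'a) 1)"
    using inner_int_bound[OF _ r(1), of p c] pgt by (simp add: n_def)
  also have "\<dots> = ennreal (r powr (2 - 2 * s) * K) * ennreal V"
  proof -
    have eqK: "r powr (real n + p) * (2 powr (-p) + 1) * 2 ^ n / (1 - 2 powr (-(real n + p))) = r powr (2 - 2 * s) * K"
      unfolding K_def np by simp
    show ?thesis unfolding eqK V(1) ..
  qed
  also have "\<dots> = ennreal (r powr (2 - 2 * s) * K * V)"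
    using V K0 by (simp add: ennreal_mult)
  finally have "ennreal Lam * (\<integral>\<^sup>+y. ennreal (indicator (ball c r) y * dist c y powr p) \<partial>lborel)
      \<le> ennreal Lam * ennreal (r powr (2 - 2 * s) * K * V)" by (rule mult_left_mono) simp
  also have "\<dots> = ennreal (Lam * (r powr (2 - 2 * s) * K * V))" using Lam K0 V by (simp add: ennreal_mult)
  also have "\<dots> \<le> ennreal eps" using r by (intro ennreal_leI) simp
  finally show ?thesis using r m by (auto simp: p_def n_def)
qed

lemma ball_borel_meas[measurable]: "ball (c::'a::euclidean_space) r \<in> sets borel"
  by simp

lemma part1:
  fixes u f :: "'a::euclidean_space \<Rightarrow> real"
  assumes s: "0 < s" "s < 1" and Om: "open \<Omega>"
    and u0: "\<forall>x. 0 \<le> u x" and umeas: "u \<in> borel_measurable borel"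
    and sup: "visc_super s \<Omega> u f" and x0: "x0 \<in> \<Omega>" "u x0 = 0" and f0: "0 \<le> f x0"
    and A: "A \<in> sets borel" "A \<subseteq> ball 0 RA" "0 < m" "\<forall>y\<in>A. m \<le> u y"
      "emeasure lborel A = ennreal a" "0 < a"
  shows False
proof -
  define \<beta> where "\<beta> = real DIM('a) + 2 * s"
  have \<beta>0: "0 < \<beta>" unfolding \<beta>_def using s by simp
  obtain r0 where r0: "0 < r0" "ball x0 r0 \<subseteq> \<Omega>" using Om x0 open_contains_ball by blast
  define D where "D = \<bar>RA\<bar> + norm x0 + 1"
  have D0: "0 < D" unfolding D_def by (simp add: add_nonneg_pos)
  define G0 where "G0 = m * (a / 2) / D powr \<beta>"
  have G0: "0 < G0" unfolding G0_def using A D0 by simp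
  obtain r where r: "0 < r" "r < r0" "emeasure lborel (ball x0 r) \<le> ennreal (a / 2)"
    "ennreal 1 * (\<integral>\<^sup>+y. ennreal (indicator (ball x0 r) y * dist x0 y powr (2 - \<beta>)) \<partial>lborel) \<le> ennreal 1"
    using small_radius[OF s A(6), of 1 1 r0 x0] r0 unfolding \<beta>_def by auto
  define I where "I = (\<integral>\<^sup>+y. ennreal (indicator (ball x0 r) y * dist x0 y powr (2 - \<beta>)) \<partial>lborel)"
  have I1: "I \<le> 1" using r(4) unfolding I_def by simp
  define \<gamma> where "\<gamma> = G0 / 2"
  have \<gamma>0: "0 < \<gamma>" unfolding \<gamma>_def using G0 by simp
  define \<phi> where "\<phi> y = 0 + (- \<gamma>) * (norm (y - x0))\<^sup>2 + 0 * (norm (y - x0))\<^sup>2" for y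
  define U where "U = ball x0 r"
  define w where "w y = (if y \<in> U then \<phi> y else u y)" for y
  have U: "open U" "x0 \<in> U" "U \<subseteq> \<Omega>" using r r0 by (auto simp: U_def)
  have C2: "C2_on U \<phi>" unfolding \<phi>_def by (rule C2_quad)
  have ph0: "\<phi> x0 = u x0" using x0 by (simp add: \<phi>_def)
  have touch: "\<forall>y\<in>U - {x0}. \<phi> y < u y"
  proof
    fix y assume "y \<in> U - {x0}"
    then have "0 < norm (y - x0)" by simp
    then have "\<phi> y < 0" using \<gamma>0 by (simp add: \<phi>_def)
    then show "\<phi> y < u y" using u0 by (metis less_le_trans)
  qed
  have "frac_pv_ge s w x0 (f x0)"
    using sup x0(1) U C2 ph0 touch unfolding visc_super_def w_def by blast
  then obtain L where L: "((\<lambda>eps. 2 * pv_trunc s w x0 eps) \<longlongrightarrow> L) (at_right 0)" "ereal (f x0) \<le> L"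
    unfolding frac_pv_ge_def by blast
  have wx0: "w x0 = 0" using U(2) x0 by (simp add: w_def \<phi>_def)
  have wmeas[measurable]: "w \<in> borel_measurable borel"
    unfolding w_def \<phi>_def U_def using umeas by measurable
  have bound: "2 * pv_trunc s w x0 eps \<le> ereal (- G0)" if eps: "0 < eps" "eps < r" for eps
  proof -
    define P where "P = (\<integral>\<^sup>+ y. ennreal (indicator {y. eps < dist x0 y} y *
         max 0 ((w x0 - w y) / dist x0 y powr \<beta>)) \<partial>lborel)"
    define N where "N = (\<integral>\<^sup>+ y. ennreal (indicator {y. eps < dist x0 y} y *
         max 0 ((w y - w x0) / dist x0 y powr \<beta>)) \<partial>lborel)"
    have pv: "pv_trunc s w x0 eps = enn2ereal P - enn2ereal N"
      unfolding pv_trunc_def P_def N_def \<beta>_def ..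
    have "P \<le> (\<integral>\<^sup>+ y. ennreal \<gamma> * ennreal (indicator (ball x0 r) y * dist x0 y powr (2 - \<beta>)) \<partial>lborel)"
      unfolding P_def
    proof (rule nn_integral_mono)
      fix y
      show "ennreal (indicator {y. eps < dist x0 y} y * max 0 ((w x0 - w y) / dist x0 y powr \<beta>))
          \<le> ennreal \<gamma> * ennreal (indicator (ball x0 r) y * dist x0 y powr (2 - \<beta>))"
      proof (cases "eps < dist x0 y")
        case False then show ?thesis by simp
      next
        case True
        then have d0: "0 < dist x0 y" using eps by linarith
        show ?thesis
        proof (cases "y \<in> U")
          case True
          have "w x0 - w y = \<gamma> * (dist x0 y)\<^sup>2"
            using True wx0 by (simp add: w_def \<phi>_def dist_norm norm_minus_commute)
          moreover have "(dist x0 y)\<^sup>2 / dist x0 y powr \<beta> = dist x0 y powr (2 - \<beta>)"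
            using d0 by (simp add: powr_diff)
          ultimately have "(w x0 - w y) / dist x0 y powr \<beta> = \<gamma> * dist x0 y powr (2 - \<beta>)"
            by (metis times_divide_eq_right)
          then have "max 0 ((w x0 - w y) / dist x0 y powr \<beta>) = \<gamma> * dist x0 y powr (2 - \<beta>)"
            using \<gamma>0 by simp
          have eqm: "ennreal \<gamma> * ennreal (indicator (ball x0 r) y * dist x0 y powr (2 - \<beta>))
              = ennreal (\<gamma> * (indicator (ball x0 r) y * dist x0 y powr (2 - \<beta>)))"
            by (rule ennreal_mult[symmetric]) (use \<gamma>0 in auto)
          have "indicator {y. eps < dist x0 y} y * max 0 ((w x0 - w y) / dist x0 y powr \<beta>)
              \<le> \<gamma> * (indicator (ball x0 r) y * dist x0 y powr (2 - \<beta>))"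
            using \<open>max 0 ((w x0 - w y) / dist x0 y powr \<beta>) = \<gamma> * dist x0 y powr (2 - \<beta>)\<close>
              True \<open>eps < dist x0 y\<close> by (simp add: U_def)
          then show ?thesis unfolding eqm by (rule ennreal_leI)
        next
          case False
          then have "w x0 - w y \<le> 0" using wx0 u0 by (simp add: w_def)
          then have "max 0 ((w x0 - w y) / dist x0 y powr \<beta>) = 0"
            using d0 by (simp add: divide_nonpos_pos)
          then show ?thesis by simp
        qed
      qed
    qed
    also have "\<dots> = ennreal \<gamma> * I"
      unfolding I_def by (rule nn_integral_cmult) measurable
    also have "\<dots> \<le> ennreal \<gamma>" using I1 by (metis mult.right_neutral mult_left_mono zero_le)
    finally have P: "P \<le> ennreal \<gamma>" .
    have AB: "A - U \<in> sets borel" using A(1) unfolding U_def by measurable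
    have "ennreal (m / D powr \<beta>) * emeasure lborel (A - U)
        = (\<integral>\<^sup>+ y. ennreal (m / D powr \<beta>) * indicator (A - U) y \<partial>lborel)"
      using AB by (simp add: nn_integral_cmult_indicator)
    also have "\<dots> \<le> N"
      unfolding N_def
    proof (rule nn_integral_mono)
      fix y
      show "ennreal (m / D powr \<beta>) * indicator (A - U) y \<le> ennreal (indicator {y. eps < dist x0 y} y *
         max 0 ((w y - w x0) / dist x0 y powr \<beta>))"
      proof (cases "y \<in> A - U")
        case False then show ?thesis by simp
      next
        case True
        then have yU: "y \<notin> U" and yA: "y \<in> A" by auto
        have dr: "r \<le> dist x0 y" using yU by (simp add: U_def)
        then have d0: "0 < dist x0 y" using r(1) by linarith
        have de: "eps < dist x0 y" using dr eps by linarith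
        have "dist x0 y \<le> norm x0 + norm y" by (simp add: dist_norm norm_triangle_ineq4)
        also have "norm y < \<bar>RA\<bar>" using A(2) yA by auto
        then have "norm x0 + norm y \<le> D" unfolding D_def by simp
        finally have dD: "dist x0 y \<le> D" .
        have "dist x0 y powr \<beta> \<le> D powr \<beta>" using dD d0 \<beta>0 by (intro powr_mono2) auto
        then have "m / D powr \<beta> \<le> m / dist x0 y powr \<beta>"
          using A(3) d0 D0 by (intro divide_left_mono) (auto intro!: mult_pos_pos)
        also have "\<dots> \<le> u y / dist x0 y powr \<beta>"
          using A(4) yA d0 by (intro divide_right_mono) auto
        also have "u y = w y - w x0" using yU wx0 by (simp add: w_def)
        finally have "m / D powr \<beta> \<le> max 0 ((w y - w x0) / dist x0 y powr \<beta>)" by simp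
        then show ?thesis using True de by (simp add: ennreal_leI)
      qed
    qed
    finally have Nlow: "ennreal (m / D powr \<beta>) * emeasure lborel (A - U) \<le> N" .
    have "ennreal (a / 2) \<le> emeasure lborel (A - U)"
      using measure_diff_half[OF A(1) _ A(5) _ r(3)[folded U_def]] A(6) by (simp add: U_def)
    then have "ennreal (m / D powr \<beta>) * ennreal (a / 2) \<le> N"
      using Nlow by (meson mult_left_mono order_trans zero_le)
    moreover have "ennreal (m / D powr \<beta>) * ennreal (a / 2) = ennreal G0"
      unfolding G0_def using A D0 by (subst ennreal_mult[symmetric]) auto
    ultimately have N: "ennreal G0 \<le> N" by simp
    have "enn2ereal P - enn2ereal N \<le> ereal \<gamma> - ereal G0"
      using P N \<gamma>0 G0 by (intro ereal_minus_mono) (auto simp: less_eq_ennreal.rep_eq)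
    then have "2 * pv_trunc s w x0 eps \<le> 2 * (ereal \<gamma> - ereal G0)"
      unfolding pv by (intro ereal_mult_left_mono) auto
    also have "\<dots> = ereal (- G0)" by (simp add: \<gamma>_def)
    finally show ?thesis .
  qed
  have "L \<le> ereal (- G0)"
  proof (rule tendsto_upperbound[OF L(1)])
    show "\<forall>\<^sub>F eps in at_right 0. 2 * pv_trunc s w x0 eps \<le> ereal (- G0)"
      unfolding eventually_at_right_field using r(1) bound by blast
  qed (simp add: trivial_limit_at_right_real)
  then have "f x0 \<le> - G0" using L(2) by (metis ereal_less_eq(3) order_trans)
  then show False using f0 G0 by simp
qed

lemma near_alg:
  fixes xh yh z :: "'a::real_inner"
  assumes "0 < \<delta>" "0 < C"
  shows "C * (((Pm + uy) / C + (1 / (2 * \<delta> * C)) * (norm (xh - yh))\<^sup>2 + 1 * (norm (xh - xh))\<^sup>2)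
           - ((Pm + uy) / C + (1 / (2 * \<delta> * C)) * (norm (xh + z - yh))\<^sup>2 + 1 * (norm (xh + z - xh))\<^sup>2))
         - ((Q + (- (1 / (2 * \<delta>))) * (norm (yh - xh))\<^sup>2 + (- 1) * (norm (yh - yh))\<^sup>2)
           - (Q + (- (1 / (2 * \<delta>))) * (norm (yh + z - xh))\<^sup>2 + (- 1) * (norm (yh + z - yh))\<^sup>2))
       = - (1 / \<delta> + C + 1) * (norm z)\<^sup>2"
proof -
  define d where "d = xh - yh"
  have e1: "xh + z - yh = d + z" by (simp add: d_def algebra_simps)
  have e2: "yh + z - xh = z - d" by (simp add: d_def algebra_simps)
  have e3: "yh - xh = - d" by (simp add: d_def)
  have par: "(norm (d + z))\<^sup>2 + (norm (z - d))\<^sup>2 = 2 * (norm d)\<^sup>2 + 2 * (norm z)\<^sup>2"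
    by (simp add: power2_norm_eq_inner inner_simps inner_commute algebra_simps)
  have zd: "(norm (z - d))\<^sup>2 = 2 * (norm d)\<^sup>2 + 2 * (norm z)\<^sup>2 - (norm (d + z))\<^sup>2"
    using par by simp
  show ?thesis
    unfolding e1 e2 e3 d_def[symmetric] zd using assms
    by (simp add: field_simps)
qed

lemma pt_combine:
  fixes C k f1 f2 gz lz :: real
  assumes "0 < C" "0 < k" "gz - lz \<le> (C * f1 - f2) / k"
  shows "max 0 (f2 / k) + C * max 0 ((- f1) / k) + gz \<le> C * max 0 (f1 / k) + max 0 ((- f2) / k) + lz"
proof -
  have "(C * f1 - f2) / k = C * (f1 / k) - f2 / k" by (simp add: diff_divide_distrib)
  then show ?thesis using assms by (auto simp: max_def field_simps split: if_splits)
qed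

lemma ennreal_ineq3:
  fixes a b c d e f C :: real
  assumes "0 \<le> a" "0 \<le> b" "0 \<le> c" "0 \<le> d" "0 \<le> e" "0 \<le> f" "0 \<le> C"
    and "a + C * b + c \<le> C * d + e + f"
  shows "ennreal a + ennreal C * ennreal b + ennreal c \<le> ennreal C * ennreal d + ennreal e + ennreal f"
proof -
  have l: "ennreal a + ennreal C * ennreal b + ennreal c = ennreal (a + C * b + c)"
    using assms by (simp add: ennreal_mult)
  have r: "ennreal C * ennreal d + ennreal e + ennreal f = ennreal (C * d + e + f)"
    using assms by (simp add: ennreal_mult)
  show ?thesis unfolding l r by (rule ennreal_leI) (rule assms(8))
qed

lemma bound_lemma:
  fixes w1 w2 :: "'a::euclidean_space \<Rightarrow> real"
  assumes s: "0 < s" "s < 1" and eps: "0 < eps" "eps < r" and C: "0 < C"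
    and w1m[measurable]: "w1 \<in> borel_measurable borel" and w2m[measurable]: "w2 \<in> borel_measurable borel"
    and near: "\<And>z. norm z < r \<Longrightarrow> C * (w1 xh - w1 (xh + z)) - (w2 yh - w2 (yh + z)) = - Lam * (norm z)\<^sup>2"
    and far: "\<And>z. r \<le> norm z \<Longrightarrow> 0 \<le> C * (w1 xh - w1 (xh + z)) - (w2 yh - w2 (yh + z))"
    and farA: "\<And>z. r \<le> norm z \<Longrightarrow> yh + z \<in> A \<Longrightarrow> m / 2 \<le> C * (w1 xh - w1 (xh + z)) - (w2 yh - w2 (yh + z))"
    and AD: "\<forall>y\<in>A. dist yh y < D" and Am[measurable]: "A \<in> sets borel"
    and B1: "\<And>y. w1 xh - w1 y \<le> B1" and B2: "\<And>y. w2 yh - w2 y \<le> B2"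
    and Lam: "0 \<le> Lam"
    and Iloss: "ennreal Lam * (\<integral>\<^sup>+y. ennreal (indicator (ball (0::'a) r) y * dist 0 y powr (2 - (real DIM('a) + 2 * s))) \<partial>lborel) \<le> ennreal (G0 / 4)"
    and Ameas: "ennreal (a / 2) \<le> emeasure lborel (A - ball yh r)"
    and m: "0 < m" and D: "0 < D" and a: "0 < a"
    and G0: "G0 = (m / 2) / D powr (real DIM('a) + 2 * s) * (a / 2)"
  shows "2 * pv_trunc s w2 yh eps \<le> ereal C * (2 * pv_trunc s w1 xh eps) + ereal (2 * (G0 / 4 - G0))"
proof -
  define \<beta> where "\<beta> = real DIM('a) + 2 * s"
  have \<beta>0: "0 < \<beta>" unfolding \<beta>_def using s by simp
  define g1 where "g1 = (m / 2) / D powr \<beta>"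
  have g1: "0 < g1" unfolding g1_def using m D by simp
  have G0g: "G0 = g1 * (a / 2)" unfolding G0 g1_def \<beta>_def ..
  have G0pos: "0 < G0" unfolding G0g using g1 a by simp
  define Py where "Py w x = (\<integral>\<^sup>+ y. ennreal (indicator {y. eps < dist x y} y *
         max 0 ((w x - w y) / dist x y powr \<beta>)) \<partial>lborel)" for w :: "'a \<Rightarrow> real" and x
  define Ny where "Ny w x = (\<integral>\<^sup>+ y. ennreal (indicator {y. eps < dist x y} y *
         max 0 ((w y - w x) / dist x y powr \<beta>)) \<partial>lborel)" for w :: "'a \<Rightarrow> real" and x
  have pv: "pv_trunc s w x eps = enn2ereal (Py w x) - enn2ereal (Ny w x)" for w x
    unfolding pv_trunc_def Py_def Ny_def \<beta>_def ..
  define Pz where "Pz w x = (\<integral>\<^sup>+ z. ennreal (indicator {z. eps < norm z} z *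
         max 0 ((w x - w (x + z)) / norm z powr \<beta>)) \<partial>lborel)" for w :: "'a \<Rightarrow> real" and x
  define Nz where "Nz w x = (\<integral>\<^sup>+ z. ennreal (indicator {z. eps < norm z} z *
         max 0 ((w (x + z) - w x) / norm z powr \<beta>)) \<partial>lborel)" for w :: "'a \<Rightarrow> real" and x
  have PyPz: "Py w x = Pz w x" "Ny w x = Nz w x" if [measurable]: "w \<in> borel_measurable borel" for w x
  proof -
    have "Py w x = (\<integral>\<^sup>+ z. ennreal (indicator {y. eps < dist x y} (x + z) *
         max 0 ((w x - w (x + z)) / dist x (x + z) powr \<beta>)) \<partial>lborel)"
      unfolding Py_def by (rule nn_integral_translate) measurable
    also have "\<dots> = Pz w x" unfolding Pz_def by (intro nn_integral_cong) (simp add: dist_norm indicator_def)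
    finally show "Py w x = Pz w x" .
    have "Ny w x = (\<integral>\<^sup>+ z. ennreal (indicator {y. eps < dist x y} (x + z) *
         max 0 ((w (x + z) - w x) / dist x (x + z) powr \<beta>)) \<partial>lborel)"
      unfolding Ny_def by (rule nn_integral_translate) measurable
    also have "\<dots> = Nz w x" unfolding Nz_def by (intro nn_integral_cong) (simp add: dist_norm indicator_def)
    finally show "Ny w x = Nz w x" .
  qed
  define F1p where "F1p z = ennreal (indicator {z. eps < norm z} z * max 0 ((w1 xh - w1 (xh + z)) / norm z powr \<beta>))" for z
  define F1n where "F1n z = ennreal (indicator {z. eps < norm z} z * max 0 ((w1 (xh + z) - w1 xh) / norm z powr \<beta>))" for z
  define F2p where "F2p z = ennreal (indicator {z. eps < norm z} z * max 0 ((w2 yh - w2 (yh + z)) / norm z powr \<beta>))" for z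
  define F2n where "F2n z = ennreal (indicator {z. eps < norm z} z * max 0 ((w2 (yh + z) - w2 yh) / norm z powr \<beta>))" for z
  define Gz where "Gz z = ennreal (g1 * indicator (A - ball yh r) (yh + z))" for z
  define Lz where "Lz z = ennreal (Lam * (indicator (ball 0 r) z * norm z powr (2 - \<beta>)))" for z :: 'a
  have pt: "F2p z + ennreal C * F1n z + Gz z \<le> ennreal C * F1p z + F2n z + Lz z" for z
  proof (cases "eps < norm z")
    case False
    then have "norm z < r" using eps by linarith
    then have "yh + z \<in> ball yh r" by (simp add: dist_norm)
    then show ?thesis using False by (simp add: F1p_def F1n_def F2p_def F2n_def Gz_def)
  next
    case True
    have nz: "0 < norm z" using True eps by linarith
    define k where "k = norm z powr \<beta>"
    have k: "0 < k" using nz by (simp add: k_def)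
    define f1 where "f1 = w1 xh - w1 (xh + z)"
    define f2 where "f2 = w2 yh - w2 (yh + z)"
    define gz where "gz = g1 * indicator (A - ball yh r) (yh + z)"
    define lz where "lz = Lam * (indicator (ball 0 r) z * norm z powr (2 - \<beta>))"
    have key: "gz - lz \<le> (C * f1 - f2) / k"
    proof (cases "norm z < r")
      case True
      then have g0: "gz = 0" by (simp add: gz_def dist_norm)
      have l0: "lz = Lam * norm z powr (2 - \<beta>)" using True by (simp add: lz_def)
      have c1: "C * f1 - f2 = - Lam * (norm z)\<^sup>2" using near[OF True] by (simp add: f1_def f2_def)
      have c2: "(norm z)\<^sup>2 / k = norm z powr (2 - \<beta>)" using nz by (simp add: k_def powr_diff)
      have "(C * f1 - f2) / k = - Lam * ((norm z)\<^sup>2 / k)" unfolding c1 by simp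
      also have "\<dots> = - Lam * norm z powr (2 - \<beta>)" unfolding c2 ..
      finally show ?thesis using g0 l0 by simp
    next
      case False
      then have rz: "r \<le> norm z" by simp
      have l0: "lz = 0" using False by (simp add: lz_def)
      have "gz \<le> (C * f1 - f2) / k"
      proof (cases "yh + z \<in> A - ball yh r")
        case True
        then have zA: "yh + z \<in> A" by simp
        then have mf: "m / 2 \<le> C * f1 - f2" using farA[OF rz] by (simp add: f1_def f2_def)
        have "dist yh (yh + z) < D" using AD zA by blast
        then have "norm z < D" by (simp add: dist_norm)
        then have kD: "k \<le> D powr \<beta>" using \<beta>0 unfolding k_def by (intro powr_mono2) auto
        have "gz = (m / 2) / D powr \<beta>" using True by (simp add: gz_def g1_def)
        also have "\<dots> \<le> (m / 2) / k" using k kD m D by (intro divide_left_mono) (auto intro!: mult_pos_pos)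
        also have "\<dots> \<le> (C * f1 - f2) / k" using mf k by (intro divide_right_mono) auto
        finally show ?thesis .
      next
        case False
        then have "gz = 0" by (simp add: gz_def)
        moreover have "0 \<le> (C * f1 - f2) / k" using far[OF rz] k by (simp add: f1_def f2_def)
        ultimately show ?thesis by simp
      qed
      then show ?thesis using l0 by simp
    qed
    have comb: "max 0 (f2 / k) + C * max 0 ((- f1) / k) + gz \<le> C * max 0 (f1 / k) + max 0 ((- f2) / k) + lz"
      by (rule pt_combine[OF C k key])
    have gz0: "0 \<le> gz" using g1 by (simp add: gz_def)
    have lz0: "0 \<le> lz" using Lam by (simp add: lz_def)
    have e: "F1p z = ennreal (max 0 (f1 / k))" "F1n z = ennreal (max 0 ((- f1) / k))"
      "F2p z = ennreal (max 0 (f2 / k))" "F2n z = ennreal (max 0 ((- f2) / k))"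
      "Gz z = ennreal gz" "Lz z = ennreal lz"
      using True by (simp_all add: F1p_def F1n_def F2p_def F2n_def Gz_def Lz_def f1_def f2_def k_def gz_def lz_def)
    show ?thesis unfolding e by (rule ennreal_ineq3) (use comb gz0 lz0 C in auto)
  qed
  have mF[measurable]: "F1p \<in> borel_measurable borel" "F1n \<in> borel_measurable borel"
    "F2p \<in> borel_measurable borel" "F2n \<in> borel_measurable borel"
    "Gz \<in> borel_measurable borel" "Lz \<in> borel_measurable borel"
    unfolding F1p_def F1n_def F2p_def F2n_def Gz_def Lz_def by measurable
  have "(\<integral>\<^sup>+z. F2p z + ennreal C * F1n z + Gz z \<partial>lborel) \<le> (\<integral>\<^sup>+z. ennreal C * F1p z + F2n z + Lz z \<partial>lborel)"
    by (rule nn_integral_mono) (rule pt)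
  moreover have "(\<integral>\<^sup>+z. F2p z + ennreal C * F1n z + Gz z \<partial>lborel)
      = (\<integral>\<^sup>+z. F2p z \<partial>lborel) + ennreal C * (\<integral>\<^sup>+z. F1n z \<partial>lborel) + (\<integral>\<^sup>+z. Gz z \<partial>lborel)"
    using mF by (simp add: nn_integral_add nn_integral_cmult)
  moreover have "(\<integral>\<^sup>+z. ennreal C * F1p z + F2n z + Lz z \<partial>lborel)
      = ennreal C * (\<integral>\<^sup>+z. F1p z \<partial>lborel) + (\<integral>\<^sup>+z. F2n z \<partial>lborel) + (\<integral>\<^sup>+z. Lz z \<partial>lborel)"
    using mF by (simp add: nn_integral_add nn_integral_cmult)
  moreover have "(\<integral>\<^sup>+z. F1p z \<partial>lborel) = Pz w1 xh" "(\<integral>\<^sup>+z. F1n z \<partial>lborel) = Nz w1 xh"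
    "(\<integral>\<^sup>+z. F2p z \<partial>lborel) = Pz w2 yh" "(\<integral>\<^sup>+z. F2n z \<partial>lborel) = Nz w2 yh"
    unfolding F1p_def F1n_def F2p_def F2n_def Pz_def Nz_def by simp_all
  ultimately have ineq: "Pz w2 yh + ennreal C * Nz w1 xh + (\<integral>\<^sup>+z. Gz z \<partial>lborel)
      \<le> ennreal C * Pz w1 xh + Nz w2 yh + (\<integral>\<^sup>+z. Lz z \<partial>lborel)" by simp
  have Gint: "ennreal G0 \<le> (\<integral>\<^sup>+z. Gz z \<partial>lborel)"
  proof -
    define S where "S = A - ball yh r"
    have Sm[measurable]: "S \<in> sets borel" unfolding S_def by measurable
    have "(\<integral>\<^sup>+z. Gz z \<partial>lborel) = (\<integral>\<^sup>+y. ennreal (g1 * indicator S y) \<partial>lborel)"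
      unfolding Gz_def S_def[symmetric] by (rule nn_integral_translate[symmetric]) measurable
    also have "\<dots> = (\<integral>\<^sup>+y. ennreal g1 * indicator S y \<partial>lborel)"
      by (intro nn_integral_cong) (simp add: indicator_def)
    also have "\<dots> = ennreal g1 * emeasure lborel S" using Sm by (simp add: nn_integral_cmult_indicator)
    finally have "(\<integral>\<^sup>+z. Gz z \<partial>lborel) = ennreal g1 * emeasure lborel S" .
    moreover have "ennreal G0 = ennreal g1 * ennreal (a / 2)" unfolding G0g by (rule ennreal_mult) (use g1 a in auto)
    moreover have "ennreal g1 * ennreal (a / 2) \<le> ennreal g1 * emeasure lborel S"
      using Ameas unfolding S_def by (rule mult_left_mono) simp
    ultimately show ?thesis by simp
  qed
  have Lint: "(\<integral>\<^sup>+z. Lz z \<partial>lborel) \<le> ennreal (G0 / 4)"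
  proof -
    have "(\<integral>\<^sup>+z. Lz z \<partial>lborel) = (\<integral>\<^sup>+z. ennreal Lam * ennreal (indicator (ball (0::'a) r) z * dist 0 z powr (2 - \<beta>)) \<partial>lborel)"
      unfolding Lz_def by (intro nn_integral_cong) (use Lam in \<open>simp add: ennreal_mult dist_0_norm\<close>)
    also have "\<dots> = ennreal Lam * (\<integral>\<^sup>+z. ennreal (indicator (ball (0::'a) r) z * dist 0 z powr (2 - \<beta>)) \<partial>lborel)"
      by (rule nn_integral_cmult) measurable
    also have "\<dots> \<le> ennreal (G0 / 4)" using Iloss unfolding \<beta>_def .
    finally show ?thesis .
  qed
  have fin: "Pz w x < top" if [measurable]: "w \<in> borel_measurable borel" and B: "\<And>y. w x - w y \<le> B" for w x B
  proof -
    define B' where "B' = max B 0"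
    have "Pz w x = Py w x" using PyPz(1)[OF that(1)] by simp
    also have "Py w x \<le> (\<integral>\<^sup>+y. ennreal B' * ennreal (indicator {y. eps < dist x y} y * dist x y powr (- \<beta>)) \<partial>lborel)"
      unfolding Py_def
    proof (rule nn_integral_mono)
      fix y
      show "ennreal (indicator {y. eps < dist x y} y * max 0 ((w x - w y) / dist x y powr \<beta>))
          \<le> ennreal B' * ennreal (indicator {y. eps < dist x y} y * dist x y powr (- \<beta>))"
      proof (cases "eps < dist x y")
        case False then show ?thesis by simp
      next
        case True
        then have d0: "0 < dist x y" using eps by linarith
        have "max 0 ((w x - w y) / dist x y powr \<beta>) \<le> B' / dist x y powr \<beta>"
          using B[of y] d0 by (auto simp: B'_def intro!: divide_right_mono)
        also have "\<dots> = B' * dist x y powr (- \<beta>)" by (simp add: powr_minus_divide)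
        finally have "max 0 ((w x - w y) / dist x y powr \<beta>) \<le> B' * dist x y powr (- \<beta>)" .
        then show ?thesis using True by (simp add: ennreal_mult[symmetric] B'_def ennreal_leI)
      qed
    qed
    also have "\<dots> = ennreal B' * (\<integral>\<^sup>+y. ennreal (indicator {y. eps < dist x y} y * dist x y powr (- \<beta>)) \<partial>lborel)"
      by (rule nn_integral_cmult) measurable
    also have "\<dots> < top"
    proof -
      have "- \<beta> < - real DIM('a)" unfolding \<beta>_def using s by simp
      then have "(\<integral>\<^sup>+y. ennreal (indicator {y. eps < dist x y} y * dist x y powr (- \<beta>)) \<partial>lborel) < \<infinity>"
        by (rule tail_int_finite[OF _ eps(1)])
      then show ?thesis by (simp add: ennreal_mult_less_top)
    qed
    finally show ?thesis .
  qed
  have c: "2 * (enn2ereal (Pz w2 yh) - enn2ereal (Nz w2 yh))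
      \<le> ereal C * (2 * (enn2ereal (Pz w1 xh) - enn2ereal (Nz w1 xh))) + ereal (2 * (G0 / 4 - G0))"
    by (rule ereal_combo[OF C fin[OF w1m B1] fin[OF w2m B2] Lint Gint _ _ ineq]) (use G0pos in auto)
  then show ?thesis unfolding pv PyPz[OF w1m] PyPz[OF w2m] .
qed

lemma part2_core:
  fixes u ut f :: "'a::euclidean_space \<Rightarrow> real"
  assumes s: "0 < s" "s < 1" and Om: "open \<Omega>" "bounded \<Omega>"
    and cu: "continuous_on (closure \<Omega>) u" and u0: "\<forall>x. 0 \<le> u x" and umeas: "u \<in> borel_measurable borel"
    and sup: "visc_super s \<Omega> u f"
    and tor0: "\<forall>x. x \<notin> \<Omega> \<longrightarrow> ut x = 0" and cut: "continuous_on (closure \<Omega>) ut"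
    and utmeas: "ut \<in> borel_measurable borel"
    and sub: "visc_sub s \<Omega> ut (\<lambda>_. 1)"
    and M: "\<forall>x. \<bar>ut x\<bar> \<le> M"
    and A: "A \<in> sets borel" "A \<subseteq> ball 0 RA" "0 < m" "\<forall>y\<in>A. m \<le> u y"
      "emeasure lborel A = ennreal a" "0 < a"
    and RO: "\<Omega> \<subseteq> ball 0 RO"
    and G0def: "G0 = (m / 2) * (a / 2) / (\<bar>RA\<bar> + \<bar>RO\<bar> + 1) powr (real DIM('a) + 2 * s)"
    and C: "0 < C" "C * M \<le> m / 2" "C < G0"
    and fb: "\<forall>x\<in>\<Omega>. u x \<le> C * M \<longrightarrow> - G0 / 2 \<le> f x"
    and x1: "x1 \<in> \<Omega>" "u x1 < C * ut x1"
  shows False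
proof -
  define \<beta> where "\<beta> = real DIM('a) + 2 * s"
  have \<beta>0: "0 < \<beta>" unfolding \<beta>_def using s by simp
  define D where "D = \<bar>RA\<bar> + \<bar>RO\<bar> + 1"
  have D0: "0 < D" unfolding D_def by (simp add: add_nonneg_pos)
  define g1 where "g1 = (m / 2) / D powr \<beta>"
  have g1: "0 < g1" unfolding g1_def using A(3) D0 by simp
  have G0g1: "G0 = g1 * (a / 2)" unfolding G0def g1_def D_def \<beta>_def by simp
  have G0pos: "0 < G0" unfolding G0g1 using g1 A(6) by simp
  have M0: "0 \<le> M" using M by (meson abs_ge_zero order_trans)
  define \<theta> where "\<theta> = C * ut x1 - u x1"
  have \<theta>: "0 < \<theta>" unfolding \<theta>_def using x1 by simp
  have cl: "compact (closure \<Omega>)" using Om(2) by (simp add: compact_closure)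
  define K where "K = closure \<Omega> \<inter> (\<lambda>x. C * ut x) -` {\<theta>..}"
  have Kc: "compact K"
  proof -
    have "closed K" unfolding K_def
      by (rule continuous_closed_preimage) (auto intro!: continuous_intros cut)
    moreover have "K \<subseteq> closure \<Omega>" unfolding K_def by auto
    ultimately show ?thesis using cl by (metis compact_Int_closed inf.absorb_iff2)
  qed
  have Kdisj: "K \<inter> (- \<Omega>) = {}"
  proof -
    { fix x assume "x \<in> K" "x \<notin> \<Omega>"
      then have "ut x = 0" "\<theta> \<le> C * ut x" using tor0 by (auto simp: K_def)
      then have False using \<theta> by simp }
    then show ?thesis by blast
  qed
  obtain \<tau> where \<tau>: "0 < \<tau>" "\<forall>x\<in>K. \<forall>y\<in>- \<Omega>. \<tau> \<le> dist x y"
    using separate_compact_closed[OF Kc _ Kdisj] Om(1) by (auto simp: closed_Compl)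
  have nearO: "y \<in> \<Omega>" if "x \<in> K" "dist x y < \<tau>" for x y
    using \<tau>(2) that by force
  define \<delta> where "\<delta> = \<tau>\<^sup>2 / (8 * (C * M + 1))"
  have CM0: "0 \<le> C * M" using C M0 by simp
  have \<delta>0: "0 < \<delta>" unfolding \<delta>_def using \<tau> CM0 by simp
  define \<Phi> where "\<Phi> p = C * ut (fst p) - u (snd p) - (norm (fst p - snd p))\<^sup>2 / (2 * \<delta>)" for p :: "'a \<times> 'a"
  define S where "S = closure \<Omega> \<times> closure \<Omega>"
  have Sc: "compact S" unfolding S_def using cl by (simp add: compact_Times)
  have Sne: "S \<noteq> {}" unfolding S_def using x1 closure_subset by blast
  have Scont: "continuous_on S \<Phi>"
  proof -
    have c1: "continuous_on S (\<lambda>p. ut (fst p))"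
      by (rule continuous_on_compose2[OF cut]) (auto simp: S_def intro!: continuous_intros)
    have c2: "continuous_on S (\<lambda>p. u (snd p))"
      by (rule continuous_on_compose2[OF cu]) (auto simp: S_def intro!: continuous_intros)
    show ?thesis unfolding \<Phi>_def using c1 c2 \<delta>0 by (intro continuous_intros) auto
  qed
  obtain pm where pm: "pm \<in> S" "\<forall>q\<in>S. \<Phi> q \<le> \<Phi> pm"
    using continuous_attains_sup[OF Sc Sne Scont] by blast
  define xh where "xh = fst pm"
  define yh where "yh = snd pm"
  define Pm where "Pm = \<Phi> pm"
  have xhc: "xh \<in> closure \<Omega>" and yhc: "yh \<in> closure \<Omega>" using pm(1) by (auto simp: S_def xh_def yh_def mem_Times_iff)
  have Phi_le: "C * ut x - u y - (norm (x - y))\<^sup>2 / (2 * \<delta>) \<le> Pm" if "x \<in> closure \<Omega>" "y \<in> closure \<Omega>" for x y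
    using pm(2)[rule_format, of "(x, y)"] that by (simp add: S_def \<Phi>_def Pm_def)
  have Pm_eq: "C * ut xh = Pm + u yh + (norm (xh - yh))\<^sup>2 / (2 * \<delta>)"
    unfolding Pm_def \<Phi>_def xh_def yh_def by simp
  have Pm_ge: "\<theta> \<le> Pm"
    using Phi_le[of x1 x1] x1 closure_subset by (auto simp: \<theta>_def)
  have sq0: "0 \<le> (norm (xh - yh))\<^sup>2 / (2 * \<delta>)" using \<delta>0 by simp
  have xhK: "xh \<in> K"
  proof -
    have "\<theta> \<le> C * ut xh" using Pm_eq Pm_ge u0[rule_format, of yh] sq0 by linarith
    then show ?thesis using xhc by (simp add: K_def)
  qed
  have utM: "ut x \<le> M" for x using M by (meson abs_le_D1)
  have d2: "(norm (xh - yh))\<^sup>2 / (2 * \<delta>) \<le> C * M"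
  proof -
    have "C * ut xh \<le> C * M" by (intro mult_left_mono utM) (use C(1) in simp)
    then show ?thesis using Pm_eq Pm_ge \<theta> u0[rule_format, of yh] by linarith
  qed
  have dlt: "norm (xh - yh) < \<tau> / 2"
  proof -
    have "(norm (xh - yh))\<^sup>2 \<le> 2 * \<delta> * (C * M)" using d2 \<delta>0 by (simp add: field_simps)
    also have "\<dots> = \<tau>\<^sup>2 * (C * M) / (4 * (C * M + 1))" unfolding \<delta>_def using CM0 by (simp add: field_simps)
    also have "\<dots> < \<tau>\<^sup>2 / 4" using \<tau> CM0 by (simp add: field_simps)
    also have "\<dots> = (\<tau> / 2)\<^sup>2" by (simp add: power_divide)
    finally have "(norm (xh - yh))\<^sup>2 < (\<tau> / 2)\<^sup>2" .
    then show ?thesis using power_less_imp_less_base[of "norm (xh - yh)" 2 "\<tau> / 2"] \<tau> by simp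
  qed
  have xhO: "xh \<in> \<Omega>" using nearO[OF xhK, of xh] \<tau> by simp
  have yhO: "yh \<in> \<Omega>" using nearO[OF xhK, of yh] dlt \<tau> by (simp add: dist_norm)
  have uyh: "u yh \<le> C * M"
  proof -
    have "C * ut xh \<le> C * M" by (intro mult_left_mono utM) (use C(1) in simp)
    then show ?thesis using Pm_eq Pm_ge \<theta> sq0 by linarith
  qed
  have fyh: "- G0 / 2 \<le> f yh" using fb yhO uyh by blast
  define Lam where "Lam = 1 / \<delta> + C + 1"
  have Lam0: "0 \<le> Lam" unfolding Lam_def using \<delta>0 C by simp
  have pos4: "0 < G0 / 4" "0 < \<tau> / 2" using G0pos \<tau> by auto
  obtain r where r: "0 < r" "r < \<tau> / 2" "emeasure lborel (ball (0::'a) r) \<le> ennreal (a / 2)"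
    "ennreal Lam * (\<integral>\<^sup>+y. ennreal (indicator (ball (0::'a) r) y * dist 0 y powr (2 - (real DIM('a) + 2 * s))) \<partial>lborel) \<le> ennreal (G0 / 4)"
    using small_radius[where c="0::'a", OF s A(6) Lam0 pos4] by blast
  define U1 where "U1 = ball xh r"
  define U2 where "U2 = ball yh r"
  have U1O: "U1 \<subseteq> \<Omega>"
  proof
    fix y assume "y \<in> U1"
    then have "dist xh y < \<tau>" using r \<tau> by (simp add: U1_def)
    then show "y \<in> \<Omega>" by (rule nearO[OF xhK])
  qed
  have U2O: "U2 \<subseteq> \<Omega>"
  proof
    fix y assume "y \<in> U2"
    then have "dist yh y < \<tau> / 2" using r by (simp add: U2_def)
    then have "dist xh y < \<tau>" using dlt dist_triangle[of xh y yh] by (simp add: dist_norm dist_commute)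
    then show "y \<in> \<Omega>" by (rule nearO[OF xhK])
  qed
  have U2ball: "emeasure lborel U2 \<le> ennreal (a / 2)"
  proof -
    have "emeasure lborel (ball yh r) = emeasure lborel (ball (0::'a) r)"
      by (simp only: emeasure_lborel_ball_scale[OF less_imp_le[OF r(1)]])
    then show ?thesis using r(3) by (simp add: U2_def)
  qed
  define \<psi>1 where "\<psi>1 y = (Pm + u yh) / C + (1 / (2 * \<delta> * C)) * (norm (y - yh))\<^sup>2 + 1 * (norm (y - xh))\<^sup>2" for y
  define \<psi>2 where "\<psi>2 y = (C * ut xh - Pm) + (- (1 / (2 * \<delta>))) * (norm (y - xh))\<^sup>2 + (- 1) * (norm (y - yh))\<^sup>2" for y
  define w1 where "w1 y = (if y \<in> U1 then \<psi>1 y else ut y)" for y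
  define w2 where "w2 y = (if y \<in> U2 then \<psi>2 y else u y)" for y
  have psi1x: "\<psi>1 xh = ut xh"
    unfolding \<psi>1_def using Pm_eq C(1) \<delta>0 by (simp add: field_simps)
  have psi1t: "\<forall>y\<in>U1 - {xh}. ut y < \<psi>1 y"
  proof
    fix y assume y: "y \<in> U1 - {xh}"
    then have "y \<in> closure \<Omega>" using U1O closure_subset by blast
    then have "C * ut y - u yh - (norm (y - yh))\<^sup>2 / (2 * \<delta>) \<le> Pm" using Phi_le yhc by blast
    then have "ut y * C \<le> Pm + u yh + (norm (y - yh))\<^sup>2 / (2 * \<delta>)" by (simp add: mult.commute)
    then have "ut y \<le> (Pm + u yh + (norm (y - yh))\<^sup>2 / (2 * \<delta>)) / C"
      using C(1) by (simp add: pos_le_divide_eq)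
    also have "(Pm + u yh + (norm (y - yh))\<^sup>2 / (2 * \<delta>)) / C = (Pm + u yh) / C + (1 / (2 * \<delta> * C)) * (norm (y - yh))\<^sup>2"
      using C(1) \<delta>0 by (simp add: field_simps)
    finally have f1: "ut y \<le> (Pm + u yh) / C + (1 / (2 * \<delta> * C)) * (norm (y - yh))\<^sup>2" .
    have f2: "0 < (norm (y - xh))\<^sup>2" using y by simp
    show "ut y < \<psi>1 y" unfolding \<psi>1_def using f1 f2 by linarith
  qed
  have psi2y: "\<psi>2 yh = u yh"
    unfolding \<psi>2_def using Pm_eq by (simp add: norm_minus_commute)
  have psi2t: "\<forall>y\<in>U2 - {yh}. \<psi>2 y < u y"
  proof
    fix y assume y: "y \<in> U2 - {yh}"
    then have "y \<in> closure \<Omega>" using U2O closure_subset by blast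
    then have "C * ut xh - u y - (norm (xh - y))\<^sup>2 / (2 * \<delta>) \<le> Pm" using Phi_le xhc by blast
    moreover have "0 < (norm (y - yh))\<^sup>2" using y by simp
    moreover have "(- (1 / (2 * \<delta>))) * (norm (y - xh))\<^sup>2 = - ((norm (xh - y))\<^sup>2 / (2 * \<delta>))"
      by (simp add: norm_minus_commute)
    ultimately show "\<psi>2 y < u y" unfolding \<psi>2_def by linarith
  qed
  have "frac_pv_le s w1 xh 1"
  proof -
    have "open U1" "xh \<in> U1" using r by (auto simp: U1_def)
    moreover have "C2_on U1 \<psi>1" unfolding \<psi>1_def by (rule C2_quad)
    ultimately show ?thesis
      using sub xhO U1O psi1x psi1t unfolding visc_sub_def w1_def by auto
  qed
  then obtain L1 where L1: "((\<lambda>eps. 2 * pv_trunc s w1 xh eps) \<longlongrightarrow> L1) (at_right 0)" "L1 \<le> ereal 1"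
    unfolding frac_pv_le_def by auto
  have "frac_pv_ge s w2 yh (f yh)"
  proof -
    have "open U2" "yh \<in> U2" using r by (auto simp: U2_def)
    moreover have "C2_on U2 \<psi>2" unfolding \<psi>2_def by (rule C2_quad)
    ultimately show ?thesis
      using sup yhO U2O psi2y psi2t unfolding visc_super_def w2_def by auto
  qed
  then obtain L2 where L2: "((\<lambda>eps. 2 * pv_trunc s w2 yh eps) \<longlongrightarrow> L2) (at_right 0)" "ereal (f yh) \<le> L2"
    unfolding frac_pv_ge_def by auto
  have bound: "2 * pv_trunc s w2 yh eps \<le> ereal C * (2 * pv_trunc s w1 xh eps) + ereal (2 * (G0 / 4 - G0))"
    if eps: "0 < eps" "eps < r" for eps
  proof -
    have w1m[measurable]: "w1 \<in> borel_measurable borel"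
      unfolding w1_def \<psi>1_def U1_def using utmeas by measurable
    have w2m[measurable]: "w2 \<in> borel_measurable borel"
      unfolding w2_def \<psi>2_def U2_def using umeas by measurable
    have xhU1: "xh \<in> U1" and yhU2: "yh \<in> U2" using r by (auto simp: U1_def U2_def)
    have w1x: "w1 xh = ut xh" using xhU1 psi1x by (simp add: w1_def)
    have w2y: "w2 yh = u yh" using yhU2 psi2y by (simp add: w2_def)
    have near: "C * (w1 xh - w1 (xh + z)) - (w2 yh - w2 (yh + z)) = - Lam * (norm z)\<^sup>2"
      if z: "norm z < r" for z
    proof -
      have "xh + z \<in> U1" "yh + z \<in> U2" using z by (auto simp: U1_def U2_def dist_norm)
      then have "C * (w1 xh - w1 (xh + z)) - (w2 yh - w2 (yh + z))
          = C * (\<psi>1 xh - \<psi>1 (xh + z)) - (\<psi>2 yh - \<psi>2 (yh + z))"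
        using xhU1 yhU2 by (simp add: w1_def w2_def)
      also have "\<dots> = - (1 / \<delta> + C + 1) * (norm z)\<^sup>2"
        unfolding \<psi>1_def \<psi>2_def by (rule near_alg[OF \<delta>0 C(1)])
      finally show ?thesis by (simp add: Lam_def)
    qed
    have farx: "C * (w1 xh - w1 (xh + z)) - (w2 yh - w2 (yh + z)) = Pm + (norm (xh - yh))\<^sup>2 / (2 * \<delta>) - C * ut (xh + z) + u (yh + z)"
      if z: "r \<le> norm z" for z
    proof -
      have "xh + z \<notin> U1" "yh + z \<notin> U2" using z by (auto simp: U1_def U2_def dist_norm)
      then have "w1 (xh + z) = ut (xh + z)" "w2 (yh + z) = u (yh + z)" by (simp_all add: w1_def w2_def)
      then show ?thesis using w1x w2y Pm_eq by (simp add: algebra_simps)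
    qed
    have far: "0 \<le> C * (w1 xh - w1 (xh + z)) - (w2 yh - w2 (yh + z))" if z: "r \<le> norm z" for z
    proof -
      have "C * ut (xh + z) - u (yh + z) \<le> Pm + (norm (xh - yh))\<^sup>2 / (2 * \<delta>)"
      proof (cases "xh + z \<in> \<Omega>")
        case False
        then have "ut (xh + z) = 0" using tor0 by simp
        then show ?thesis using u0[rule_format, of "yh + z"] Pm_ge \<theta> sq0 by simp
      next
        case True
        show ?thesis
        proof (cases "yh + z \<in> \<Omega>")
          case True
          have "C * ut (xh + z) - u (yh + z) - (norm ((xh + z) - (yh + z)))\<^sup>2 / (2 * \<delta>) \<le> Pm"
            by (rule Phi_le) (use True \<open>xh + z \<in> \<Omega>\<close> closure_subset in auto)
          then show ?thesis by simp
        next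
          case False
          have "xh + z \<notin> K"
          proof
            assume "xh + z \<in> K"
            moreover have "dist (xh + z) (yh + z) < \<tau>" using dlt \<tau> by (simp add: dist_norm)
            ultimately have "yh + z \<in> \<Omega>" by (rule nearO)
            then show False using False by simp
          qed
          then have "C * ut (xh + z) < \<theta>" using \<open>xh + z \<in> \<Omega>\<close> closure_subset by (auto simp: K_def)
          then show ?thesis using u0[rule_format, of "yh + z"] Pm_ge sq0 by linarith
        qed
      qed
      then show ?thesis using farx[OF z] by linarith
    qed
    have farA: "m / 2 \<le> C * (w1 xh - w1 (xh + z)) - (w2 yh - w2 (yh + z))"
      if z: "r \<le> norm z" and zA: "yh + z \<in> A" for z
    proof -
      have "C * ut (xh + z) \<le> C * M" by (intro mult_left_mono utM) (use C(1) in simp)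
      moreover have "m \<le> u (yh + z)" using A(4) zA by blast
      ultimately show ?thesis using farx[OF z] Pm_ge \<theta> sq0 C(2) by linarith
    qed
    have AD: "\<forall>y\<in>A. dist yh y < D"
    proof
      fix y assume "y \<in> A"
      then have "norm y < RA" using A(2) by auto
      moreover have "norm yh < RO" using RO yhO by auto
      moreover have "dist yh y \<le> norm yh + norm y" by (simp add: dist_norm norm_triangle_ineq4)
      ultimately show "dist yh y < D" unfolding D_def by linarith
    qed
    have B1: "w1 xh - w1 y \<le> 2 * M" for y
    proof -
      have "- M \<le> w1 y"
      proof (cases "y \<in> U1")
        case True
        then have "ut y \<le> \<psi>1 y" using psi1t psi1x by (cases "y = xh") (auto intro: less_imp_le)
        then show ?thesis using M[rule_format, of y] True by (simp add: w1_def)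
      next
        case False
        then show ?thesis using M[rule_format, of y] by (simp add: w1_def)
      qed
      moreover have "w1 xh \<le> M" using w1x utM by simp
      ultimately show ?thesis by simp
    qed
    have B2: "w2 yh - w2 y \<le> u yh + \<tau>\<^sup>2 / (2 * \<delta>) + \<tau>\<^sup>2" for y
    proof -
      have "- (\<tau>\<^sup>2 / (2 * \<delta>) + \<tau>\<^sup>2) \<le> w2 y"
      proof (cases "y \<in> U2")
        case True
        then have dy: "dist yh y < r" by (simp add: U2_def)
        have n1: "norm (y - yh) < \<tau>" using dy r by (simp add: dist_norm norm_minus_commute)
        have "dist xh y < \<tau>" using dy r dlt dist_triangle[of xh y yh] by (simp add: dist_norm dist_commute)
        then have n2: "norm (y - xh) < \<tau>" by (simp add: dist_norm norm_minus_commute)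
        have s1: "(norm (y - yh))\<^sup>2 \<le> \<tau>\<^sup>2" using n1 by (intro power_mono) auto
        have s2: "(norm (y - xh))\<^sup>2 \<le> \<tau>\<^sup>2" using n2 by (intro power_mono) auto
        have s3: "(norm (y - xh))\<^sup>2 / (2 * \<delta>) \<le> \<tau>\<^sup>2 / (2 * \<delta>)" using s2 \<delta>0 by (intro divide_right_mono) auto
        have "0 \<le> C * ut xh - Pm" using Pm_eq u0[rule_format, of yh] sq0 by linarith
        moreover have "\<psi>2 y = (C * ut xh - Pm) - (norm (y - xh))\<^sup>2 / (2 * \<delta>) - (norm (y - yh))\<^sup>2"
          by (simp add: \<psi>2_def)
        ultimately have "- (\<tau>\<^sup>2 / (2 * \<delta>) + \<tau>\<^sup>2) \<le> \<psi>2 y" using s1 s3 by linarith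
        then show ?thesis using True by (simp add: w2_def)
      next
        case False
        have "0 \<le> \<tau>\<^sup>2 / (2 * \<delta>)" using \<delta>0 by simp
        moreover have "0 \<le> \<tau>\<^sup>2" by simp
        moreover have "w2 y = u y" using False by (simp add: w2_def)
        ultimately show ?thesis using u0[rule_format, of y] by linarith
      qed
      then show ?thesis using w2y by simp
    qed
    have Ameas: "ennreal (a / 2) \<le> emeasure lborel (A - ball yh r)"
      using measure_diff_half[OF A(1) _ A(5) _ U2ball[unfolded U2_def]] A(6) by simp
    have G0': "G0 = (m / 2) / D powr (real DIM('a) + 2 * s) * (a / 2)"
      unfolding G0def D_def by simp
    show ?thesis
      by (rule bound_lemma[OF s eps C(1) w1m w2m near far farA AD A(1) B1 B2 Lam0 r(4) Ameas A(3) D0 A(6) G0'])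
  qed
  have lim2: "((\<lambda>eps. ereal C * (2 * pv_trunc s w1 xh eps) + ereal (2 * (G0 / 4 - G0))) \<longlongrightarrow>
      ereal C * L1 + ereal (2 * (G0 / 4 - G0))) (at_right 0)"
    by (intro tendsto_add_ereal_general tendsto_cmult_ereal L1(1) tendsto_const) auto
  have "L2 \<le> ereal C * L1 + ereal (2 * (G0 / 4 - G0))"
  proof (rule tendsto_le[OF _ lim2 L2(1)])
    show "\<forall>\<^sub>F eps in at_right 0. 2 * pv_trunc s w2 yh eps \<le> ereal C * (2 * pv_trunc s w1 xh eps) + ereal (2 * (G0 / 4 - G0))"
      unfolding eventually_at_right_field using r(1) bound by blast
  qed (simp add: trivial_limit_at_right_real)
  also have "\<dots> \<le> ereal C * ereal 1 + ereal (2 * (G0 / 4 - G0))"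
    using L1(2) C(1) by (intro add_right_mono ereal_mult_left_mono) auto
  also have "ereal C * ereal 1 + ereal (2 * (G0 / 4 - G0)) = ereal (C + 2 * (G0 / 4 - G0))" by simp
  finally have "L2 \<le> ereal (C + 2 * (G0 / 4 - G0))" .
  then have "ereal (f yh) \<le> ereal (C + 2 * (G0 / 4 - G0))" using L2(2) by (rule order_trans[rotated])
  then have "f yh \<le> C + 2 * (G0 / 4 - G0)" by (simp only: ereal_less_eq)
  then show False using fyh C(3) by simp
qed

theorem corollary1p3:
  fixes s :: real and \<Omega> :: "'a::euclidean_space set"
    and u ut :: "'a \<Rightarrow> real" and g :: "real \<Rightarrow> real"
  assumes "0 < s" "s < 1"
    and "open \<Omega>" "bounded \<Omega>"
    and "L1_2s s u" "continuous_on (closure \<Omega>) u" "\<forall>x. 0 \<le> u x"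
    and "continuous_on {0..} g" "g 0 = 0"
    and "visc_super s \<Omega> u (\<lambda>x. g (u x))"
    and "torsion_function s \<Omega> ut"
  shows "(AE x in lborel. u x = 0) \<or>
         ((\<forall>x\<in>\<Omega>. 0 < u x) \<and> (\<exists>C>0. \<forall>x\<in>\<Omega>. C * ut x \<le> u x))"
proof (cases "AE x in lborel. u x = 0")
  case True
  then show ?thesis by simp
next
  case notAE: False
  note s = assms(1,2) and Om = assms(3,4) and uL = assms(5) and cu = assms(6) and u0 = assms(7)
    and gc = assms(8) and g0 = assms(9) and sup = assms(10) and tor = assms(11)
  have umeas: "u \<in> borel_measurable borel" using uL by (rule L1_2s_meas)
  obtain A m RA a where A: "A \<in> sets borel" "A \<subseteq> ball 0 RA" "0 < m" "\<forall>y\<in>A. m \<le> u y"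
      "emeasure lborel A = ennreal a" "0 < a"
    using gain_set[OF umeas u0 notAE] by blast
  have pos: "\<forall>x\<in>\<Omega>. 0 < u x"
  proof
    fix x0 assume x0: "x0 \<in> \<Omega>"
    show "0 < u x0"
    proof (rule ccontr)
      assume "\<not> 0 < u x0"
      then have ux0: "u x0 = 0" using u0[rule_format, of x0] by linarith
      have "0 \<le> g (u x0)" using ux0 g0 by simp
      then show False
        using part1[OF s Om(1) u0 umeas sup x0 ux0 _ A] by simp
    qed
  qed
  have utL: "L1_2s s ut" and cut: "continuous_on (closure \<Omega>) ut" and tor0: "\<forall>x. x \<notin> \<Omega> \<longrightarrow> ut x = 0"
    and sub: "visc_sub s \<Omega> ut (\<lambda>_. 1)"
    using tor unfolding torsion_function_def visc_sol_def by auto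
  have utmeas: "ut \<in> borel_measurable borel" using utL by (rule L1_2s_meas)
  have "compact (closure \<Omega>)" using Om(2) by (simp add: compact_closure)
  then have "bounded (ut ` closure \<Omega>)" using cut by (intro compact_imp_bounded compact_continuous_image)
  then obtain M0 where M0: "\<forall>x\<in>closure \<Omega>. \<bar>ut x\<bar> \<le> M0" by (auto simp: bounded_real)
  define M where "M = max M0 0"
  have M: "\<forall>x. \<bar>ut x\<bar> \<le> M"
  proof
    fix x show "\<bar>ut x\<bar> \<le> M"
    proof (cases "x \<in> \<Omega>")
      case True then show ?thesis using M0 closure_subset by (force simp: M_def)
    next
      case False then show ?thesis using tor0 by (simp add: M_def)
    qed
  qed
  have M0': "0 \<le> M" by (simp add: M_def)
  obtain RO where RO: "\<Omega> \<subseteq> ball 0 RO" using bounded_subset_ballD[OF Om(2)] by blast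
  define G0 where "G0 = (m / 2) * (a / 2) / (\<bar>RA\<bar> + \<bar>RO\<bar> + 1) powr (real DIM('a) + 2 * s)"
  have G0pos: "0 < G0" unfolding G0_def using A(3,6)
    by (intro divide_pos_pos mult_pos_pos) (auto simp: add_nonneg_pos)
  obtain \<eta> where \<eta>: "0 < \<eta>" "\<forall>t\<in>{0..}. dist t 0 < \<eta> \<longrightarrow> dist (g t) (g 0) < G0 / 2"
    using gc G0pos unfolding continuous_on_iff by (metis atLeast_iff half_gt_zero order_refl)
  define C where "C = min (G0 / 2) (min (\<eta> / (2 * (M + 1))) (m / (2 * (M + 1))))"
  have C0: "0 < C" unfolding C_def using G0pos \<eta>(1) A(3) M0' by simp
  have CG: "C < G0" unfolding C_def using G0pos by simp
  have CM1: "C * M \<le> m / 2"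
  proof -
    have "C * M \<le> m / (2 * (M + 1)) * M" unfolding C_def using M0' by (intro mult_right_mono) auto
    also have "\<dots> \<le> m / 2" using A(3) M0' by (simp add: field_simps)
    finally show ?thesis .
  qed
  have CM2: "C * M < \<eta>"
  proof -
    have "C * M \<le> \<eta> / (2 * (M + 1)) * M" unfolding C_def using M0' by (intro mult_right_mono) auto
    also have "\<dots> \<le> \<eta> / (2 * (M + 1)) * (M + 1)" using \<eta>(1) M0' by (intro mult_left_mono) auto
    also have "\<dots> = \<eta> / 2" using M0' by (simp add: field_simps)
    also have "\<dots> < \<eta>" using \<eta>(1) by simp
    finally show ?thesis .
  qed
  have fb: "\<forall>x\<in>\<Omega>. u x \<le> C * M \<longrightarrow> - G0 / 2 \<le> g (u x)"
  proof (intro ballI impI)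
    fix x assume "x \<in> \<Omega>" "u x \<le> C * M"
    then have "dist (u x) 0 < \<eta>" using u0 CM2 by (simp add: dist_real_def)
    then have "dist (g (u x)) (g 0) < G0 / 2" using \<eta>(2) u0 by simp
    then show "- G0 / 2 \<le> g (u x)" using g0 by (simp add: dist_real_def)
  qed
  have "\<forall>x\<in>\<Omega>. C * ut x \<le> u x"
  proof (rule ccontr)
    assume "\<not> ?thesis"
    then obtain x1 where x1: "x1 \<in> \<Omega>" "u x1 < C * ut x1" by (auto simp: not_le)
    show False
      by (rule part2_core[OF s Om cu u0 umeas sup tor0 cut utmeas sub M A RO G0_def C0 CM1 CG fb x1])
  qed
  then show ?thesis using pos C0 by blast
qed

end
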